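(* Let $\mathbf{K}$ be a $(\phi,\delta)$-field with $\mathbf{k}:=\mathbf{K}^\phi$ algebraically closed, let $(a,b)\in\mathbf{K}^\times\times\mathbf{K}$, let $R$ be a $\mathbf{K}$-$(\phi,\delta)$-algebra and $v\in R\setminus\{0\}$. (i) If $\phi(v)-v=b$ and $v$ is hyperalgebraic over $\mathbf{K}$, then there exist a nonzero linear homogeneous $\delta$-polynomial $\mathcal{L}(y)\in\mathbf{k}\{y\}$ and $f\in\mathbf{K}$ such that $\mathcal{L}(b)=\phi(f)-f$. (ii) Assume moreover that $v$ is invertible in $R$. If $\phi(v)=av$ and $v$ is hyperalgebraic over $\mathbf{K}$, then there exist a nonzero linear homogeneous $\delta$-polynomial $\mathcal{L}(y)\in\mathbf{k}\{y\}$ and $f\in\mathbf{K}$ such that $\mathcal{L}\left(\frac{\delta(a)}{a}\right)=\phi(f)-f$. The converse of either statement holds if $R^\phi=\mathbf{k}$.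
   Context: A $(\phi,\delta)$-field is a field (of characteristic zero) with an automorphism $\phi$ and a derivation $\delta$ that commute; $\mathbf{K}^\phi=\{f:\phi(f)=f\}$ is stable under $\delta$. A $\mathbf{K}$-$(\phi,\delta)$-algebra is a commutative ring extension of $\mathbf{K}$ with an automorphism and commuting derivation extending $\phi,\delta$. $\mathbf{k}\{y\}$ is the ring of differential polynomials (polynomials in $y,\delta y,\delta^2y,\dots$) over $\mathbf{k}$; a linear homogeneous one has the form $\sum_i c_i\delta^i(y)$. $v$ hyperalgebraic over $\mathbf{K}$ means $P(v)=0$ for some nonzero $P\in\mathbf{K}\{y\}$. *)

theory Defs
  imports Main "HOL-Library.Poly_Mapping" "HOL-Computational_Algebra.Polynomial"
begin

text \<open>The ambient (phi,delta)-algebra R is a type 'r; the base field K is a subset of it.\<close>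

definition subfield_of :: "'r::comm_ring_1 set \<Rightarrow> bool" where
  "subfield_of K \<longleftrightarrow> 0 \<in> K \<and> 1 \<in> K \<and> (\<forall>x\<in>K. \<forall>y\<in>K. x + y \<in> K \<and> x - y \<in> K \<and> x * y \<in> K)
     \<and> (\<forall>x\<in>K. x \<noteq> 0 \<longrightarrow> (\<exists>y\<in>K. x * y = 1))"

definition ring_automorphism :: "('r::comm_ring_1 \<Rightarrow> 'r) \<Rightarrow> bool" where
  "ring_automorphism \<phi> \<longleftrightarrow> bij \<phi> \<and> \<phi> 1 = 1 \<and> (\<forall>x y. \<phi> (x + y) = \<phi> x + \<phi> y \<and> \<phi> (x * y) = \<phi> x * \<phi> y)"

definition derivation :: "('r::comm_ring_1 \<Rightarrow> 'r) \<Rightarrow> bool" where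
  "derivation \<delta> \<longleftrightarrow> (\<forall>x y. \<delta> (x + y) = \<delta> x + \<delta> y \<and> \<delta> (x * y) = x * \<delta> y + \<delta> x * y)"

definition phi_delta_setting :: "'r::comm_ring_1 set \<Rightarrow> ('r \<Rightarrow> 'r) \<Rightarrow> ('r \<Rightarrow> 'r) \<Rightarrow> bool" where
  "phi_delta_setting K \<phi> \<delta> \<longleftrightarrow> subfield_of K \<and> (\<forall>n::nat. n > 0 \<longrightarrow> (of_nat n :: 'r) \<noteq> 0)
     \<and> ring_automorphism \<phi> \<and> \<phi> ` K = K \<and> derivation \<delta> \<and> \<delta> ` K \<subseteq> K
     \<and> (\<forall>x. \<phi> (\<delta> x) = \<delta> (\<phi> x))"

definition const_field :: "'r set \<Rightarrow> ('r \<Rightarrow> 'r) \<Rightarrow> 'r set" where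
  "const_field K \<phi> = {x \<in> K. \<phi> x = x}"

definition alg_closed_subfield :: "'r::comm_ring_1 set \<Rightarrow> bool" where
  "alg_closed_subfield k \<longleftrightarrow> (\<forall>p :: 'r poly. (\<forall>i. coeff p i \<in> k) \<and> degree p \<ge> 1 \<longrightarrow> (\<exists>x\<in>k. poly p x = 0))"

text \<open>Differential polynomials in y: finitely supported maps from monomials
  (finitely supported exponent vectors for y, delta y, delta^2 y, ...) to coefficients.\<close>
type_synonym 'r dpoly = "(nat \<Rightarrow>\<^sub>0 nat) \<Rightarrow>\<^sub>0 'r"

definition dpoly_eval :: "('r::comm_ring_1 \<Rightarrow> 'r) \<Rightarrow> 'r dpoly \<Rightarrow> 'r \<Rightarrow> 'r" where
  "dpoly_eval \<delta> P v = (\<Sum>m\<in>Poly_Mapping.keys P. Poly_Mapping.lookup P m * (\<Prod>i\<in>Poly_Mapping.keys (m :: nat \<Rightarrow>\<^sub>0 nat). ((\<delta> ^^ i) v) ^ Poly_Mapping.lookup m i))"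

definition hyperalgebraic :: "'r::comm_ring_1 set \<Rightarrow> ('r \<Rightarrow> 'r) \<Rightarrow> 'r \<Rightarrow> bool" where
  "hyperalgebraic K \<delta> v \<longleftrightarrow> (\<exists>P :: 'r dpoly. P \<noteq> 0 \<and> (\<forall>m. Poly_Mapping.lookup P m \<in> K) \<and> dpoly_eval \<delta> P v = 0)"

definition linear_telescoper :: "'r::comm_ring_1 set \<Rightarrow> 'r set \<Rightarrow> ('r \<Rightarrow> 'r) \<Rightarrow> ('r \<Rightarrow> 'r) \<Rightarrow> 'r \<Rightarrow> bool" where
  "linear_telescoper k K \<phi> \<delta> g \<longleftrightarrow> (\<exists>(n::nat) (c::nat \<Rightarrow> 'r). (\<forall>i\<le>n. c i \<in> k) \<and> (\<exists>i\<le>n. c i \<noteq> 0)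
      \<and> (\<exists>f\<in>K. (\<Sum>i\<le>n. c i * (\<delta> ^^ i) g) = \<phi> f - f))"

end

theory Submission
  imports Defs
begin


locale pds =
  fixes K :: "'r::comm_ring_1 set" and \<phi> \<delta> :: "'r \<Rightarrow> 'r"
  assumes setting: "phi_delta_setting K \<phi> \<delta>"
begin

lemma sub: "subfield_of K" using setting by (simp add: phi_delta_setting_def)
lemma K0[simp]: "0 \<in> K" using sub by (simp add: subfield_of_def)
lemma K1[simp]: "1 \<in> K" using sub by (simp add: subfield_of_def)
lemma Kadd[simp]: "x \<in> K \<Longrightarrow> y \<in> K \<Longrightarrow> x + y \<in> K" using sub by (simp add: subfield_of_def)
lemma Kdiff[simp]: "x \<in> K \<Longrightarrow> y \<in> K \<Longrightarrow> x - y \<in> K" using sub by (simp add: subfield_of_def)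
lemma Kmult[simp]: "x \<in> K \<Longrightarrow> y \<in> K \<Longrightarrow> x * y \<in> K" using sub by (simp add: subfield_of_def)
lemma Kinv: "x \<in> K \<Longrightarrow> x \<noteq> 0 \<Longrightarrow> \<exists>y\<in>K. x * y = 1" using sub by (simp add: subfield_of_def)
lemma Kuminus[simp]: "x \<in> K \<Longrightarrow> - x \<in> K" using Kdiff[of 0 x] by simp
lemma Kpow[simp]: "x \<in> K \<Longrightarrow> x ^ n \<in> K" by (induction n) auto
lemma Ksum[simp]: "(\<And>i. i \<in> S \<Longrightarrow> f i \<in> K) \<Longrightarrow> sum f S \<in> K"
  by (induction S rule: infinite_finite_induct) auto
lemma Kof_nat[simp]: "of_nat n \<in> K" by (induction n) auto
lemma Kof_int[simp]: "of_int j \<in> K"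
proof (cases j rule: int_cases)
  case (nonneg n) then show ?thesis by simp
next
  case (neg n)
  then have "of_int j = - (of_nat (Suc n) :: 'r)" by (simp only: of_int_minus of_int_of_nat_eq)
  then show ?thesis by (simp only: Kuminus Kof_nat)
qed
lemma Ksum_list[simp]: "(\<And>x. x \<in> set xs \<Longrightarrow> x \<in> K) \<Longrightarrow> sum_list xs \<in> K"
  by (induction xs) auto

lemma char0: "n > 0 \<Longrightarrow> (of_nat n :: 'r) \<noteq> 0" using setting by (simp add: phi_delta_setting_def)
lemma char0_int: "j \<noteq> 0 \<Longrightarrow> (of_int j :: 'r) \<noteq> 0"
proof (cases "j \<ge> 0")
  case True assume "j \<noteq> 0" then show ?thesis using True char0[of "nat j"] by (metis of_int_of_nat_eq int_nat_eq less_le nat_0_less_mult_iff zero_less_nat_eq mult_1)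
next
  case False
  then have "of_int j = - (of_nat (nat (-j)) :: 'r)" by simp
  then show ?thesis using char0[of "nat (-j)"] False by auto
qed

lemma K_nz_mult: "x \<in> K \<Longrightarrow> y \<in> K \<Longrightarrow> x \<noteq> 0 \<Longrightarrow> y \<noteq> 0 \<Longrightarrow> x * y \<noteq> 0"
proof
  assume "x \<in> K" "y \<in> K" "x \<noteq> 0" "y \<noteq> 0" "x * y = 0"
  then obtain x' where "x * x' = 1" using Kinv by blast
  then have "y = x' * (x * y)" by (simp add: mult.assoc[symmetric] mult.commute[of x' x])
  with \<open>x*y = 0\<close> \<open>y\<noteq>0\<close> show False by simp
qed

lemma K_unit_mult_nz: "x \<in> K \<Longrightarrow> x \<noteq> 0 \<Longrightarrow> y \<noteq> 0 \<Longrightarrow> x * y \<noteq> 0"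
proof
  assume "x \<in> K" "x \<noteq> 0" "y \<noteq> 0" "x * y = 0"
  then obtain x' where "x * x' = 1" using Kinv by blast
  then have "y = x' * (x * y)" by (simp add: mult.assoc[symmetric] mult.commute[of x' x])
  with \<open>x*y = 0\<close> \<open>y\<noteq>0\<close> show False by simp
qed

lemma aut: "ring_automorphism \<phi>" using setting by (simp add: phi_delta_setting_def)
lemma phi_add[simp]: "\<phi> (x + y) = \<phi> x + \<phi> y" using aut by (simp add: ring_automorphism_def)
lemma phi_mult[simp]: "\<phi> (x * y) = \<phi> x * \<phi> y" using aut by (simp add: ring_automorphism_def)
lemma phi_1[simp]: "\<phi> 1 = 1" using aut by (simp add: ring_automorphism_def)
lemma phi_0[simp]: "\<phi> 0 = 0" using phi_add[of 0 0] by simp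
lemma phi_uminus[simp]: "\<phi> (- x) = - \<phi> x" using phi_add[of x "-x"] minus_unique[of "\<phi> x" "\<phi> (-x)"] by simp
lemma phi_diff[simp]: "\<phi> (x - y) = \<phi> x - \<phi> y" using phi_add[of x "-y"] by simp
lemma phi_pow[simp]: "\<phi> (x ^ n) = \<phi> x ^ n" by (induction n) auto
lemma phi_sum: "\<phi> (sum f S) = (\<Sum>i\<in>S. \<phi> (f i))" by (induction S rule: infinite_finite_induct) auto
lemma phi_prod: "\<phi> (prod f S) = (\<Prod>i\<in>S. \<phi> (f i))" by (induction S rule: infinite_finite_induct) auto
lemma phi_sum_list: "\<phi> (sum_list xs) = sum_list (map \<phi> xs)" by (induction xs) auto
lemma phi_of_nat[simp]: "\<phi> (of_nat n) = of_nat n" by (induction n) auto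
lemma phi_of_int[simp]: "\<phi> (of_int n) = of_int n" by (cases n) auto
lemma phiK[simp]: "x \<in> K \<Longrightarrow> \<phi> x \<in> K" using setting by (auto simp: phi_delta_setting_def)
lemma phi_inj: "\<phi> x = \<phi> y \<Longrightarrow> x = y" using aut by (auto simp: ring_automorphism_def bij_def inj_def)
lemma phi_eq0[simp]: "\<phi> x = 0 \<longleftrightarrow> x = 0" using phi_inj[of x 0] by auto

lemma der: "derivation \<delta>" using setting by (simp add: phi_delta_setting_def)
lemma d_add[simp]: "\<delta> (x + y) = \<delta> x + \<delta> y" using der by (simp add: derivation_def)
lemma d_mult: "\<delta> (x * y) = x * \<delta> y + \<delta> x * y" using der by (simp add: derivation_def)
lemma d_0[simp]: "\<delta> 0 = 0" using d_add[of 0 0] by simp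
lemma d_1[simp]: "\<delta> 1 = 0" using d_mult[of 1 1] by simp
lemma d_uminus[simp]: "\<delta> (- x) = - \<delta> x" using d_add[of x "-x"] minus_unique[of "\<delta> x" "\<delta> (-x)"] by simp
lemma d_diff[simp]: "\<delta> (x - y) = \<delta> x - \<delta> y" using d_add[of x "-y"] by simp
lemma dK[simp]: "x \<in> K \<Longrightarrow> \<delta> x \<in> K" using setting by (auto simp: phi_delta_setting_def)
lemma phi_d: "\<phi> (\<delta> x) = \<delta> (\<phi> x)" using setting by (auto simp: phi_delta_setting_def)
lemma d_sum: "\<delta> (sum f S) = (\<Sum>i\<in>S. \<delta> (f i))" by (induction S rule: infinite_finite_induct) auto
lemma d_of_nat[simp]: "\<delta> (of_nat n) = 0" by (induction n) auto

lemma di_add[simp]: "(\<delta>^^i) (x + y) = (\<delta>^^i) x + (\<delta>^^i) y" by (induction i) auto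
lemma di_diff[simp]: "(\<delta>^^i) (x - y) = (\<delta>^^i) x - (\<delta>^^i) y" by (induction i) auto
lemma di_0[simp]: "(\<delta>^^i) 0 = 0" by (induction i) auto
lemma di_K[simp]: "x \<in> K \<Longrightarrow> (\<delta>^^i) x \<in> K" by (induction i) auto
lemma phi_di: "\<phi> ((\<delta>^^i) x) = (\<delta>^^i) (\<phi> x)" by (induction i) (auto simp: phi_d)
lemma di_sum: "(\<delta>^^i) (sum f S) = (\<Sum>j\<in>S. (\<delta>^^i) (f j))" by (induction S rule: infinite_finite_induct) auto
lemma di_scale: "c \<in> K \<Longrightarrow> \<delta> c = 0 \<Longrightarrow> (\<delta>^^i) (c * x) = c * (\<delta>^^i) x"
  by (induction i) (auto simp: d_mult)

lemma d_pow: "x * xi = 1 \<Longrightarrow> \<delta> (x ^ n) = of_nat n * (\<delta> x * xi) * x ^ n"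
proof (induction n)
  case (Suc n)
  have e: "x ^ n = xi * x ^ Suc n" using Suc.prems by (simp add: mult.assoc[symmetric] mult.commute[of xi x])
  have e2: "\<delta> x * x ^ n = (\<delta> x * xi) * x ^ Suc n" by (metis e mult.assoc)
  have "\<delta> (x ^ Suc n) = x * \<delta> (x^n) + \<delta> x * x ^ n" by (simp only: power_Suc d_mult)
  also have "\<dots> = x * (of_nat n * (\<delta> x * xi) * x ^ n) + (\<delta> x * xi) * x ^ Suc n" by (simp only: e2 Suc.IH[OF Suc.prems])
  also have "\<dots> = (of_nat n + 1) * (\<delta> x * xi) * x ^ Suc n" by (simp add: algebra_simps)
  finally show ?case by (simp only: of_nat_Suc add.commute)
qed simp

end


section \<open>Linear combinations as lists\<close>

definition lcv :: "('k \<Rightarrow> 'r::comm_ring_1) \<Rightarrow> ('k \<times> 'r) list \<Rightarrow> 'r" where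
  "lcv val xs = sum_list (map (\<lambda>(k,c). c * val k) xs)"
definition coef :: "('k \<times> 'r::comm_ring_1) list \<Rightarrow> 'k \<Rightarrow> 'r" where
  "coef xs k = sum_list (map snd (filter (\<lambda>p. fst p = k) xs))"

lemma lcv_Nil[simp]: "lcv val [] = 0" by (simp add: lcv_def)
lemma lcv_Cons[simp]: "lcv val ((k,c)#xs) = c * val k + lcv val xs" by (simp add: lcv_def)
lemma lcv_append[simp]: "lcv val (xs @ ys) = lcv val xs + lcv val ys" by (simp add: lcv_def)
lemma coef_Nil[simp]: "coef [] k = 0" by (simp add: coef_def)
lemma coef_Cons[simp]: "coef ((k',c)#xs) k = (if k' = k then c else 0) + coef xs k" by (simp add: coef_def)
lemma coef_append[simp]: "coef (xs @ ys) k = coef xs k + coef ys k" by (simp add: coef_def)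

lemma coef_notin: "k \<notin> fst ` set xs \<Longrightarrow> coef xs k = 0"
  by (induction xs) (auto simp: coef_def)

lemma lcv_coef: "finite U \<Longrightarrow> fst ` set xs \<subseteq> U \<Longrightarrow> lcv val xs = (\<Sum>k\<in>U. coef xs k * val k)"
proof (induction xs)
  case (Cons p xs)
  obtain k' c where p: "p = (k',c)" by force
  have "k' \<in> U" using Cons.prems p by auto
  have "lcv val (p#xs) = c * val k' + (\<Sum>k\<in>U. coef xs k * val k)" using Cons p by auto
  also have "c * val k' = (\<Sum>k\<in>U. (if k' = k then c else 0) * val k)"
  proof -
    have "(\<Sum>k\<in>U. (if k' = k then c else 0) * val k) = (\<Sum>k\<in>U. if k' = k then c * val k' else 0)"
      by (rule sum.cong) auto
    then show ?thesis using \<open>k' \<in> U\<close> Cons.prems(1) by (simp add: sum.delta)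
  qed
  finally show ?case using p by (simp add: sum.distrib distrib_right)
qed simp

lemma lcv_scale: "lcv val (map (\<lambda>(k,c). (k, s*c)) xs) = s * lcv val xs"
  by (induction xs) (auto simp: algebra_simps)
lemma coef_scale: "coef (map (\<lambda>(k,c). (k, s*c)) xs) k = s * coef xs k"
  by (induction xs) (auto simp: algebra_simps)

lemma lcv_concat: "lcv val (concat xss) = sum_list (map (lcv val) xss)"
  by (induction xss) auto
lemma coef_concat: "coef (concat xss) k = sum_list (map (\<lambda>xs. coef xs k) xss)"
  by (induction xss) auto

lemma lcv_keys_list: "distinct ks \<Longrightarrow> lcv val (map (\<lambda>k. (k, f k)) ks) = (\<Sum>k\<in>set ks. f k * val k)"
  by (induction ks) auto
lemma coef_keys_list: "distinct ks \<Longrightarrow> coef (map (\<lambda>k. (k, f k)) ks) k = (if k \<in> set ks then f k else 0)"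
  by (induction ks) auto

lemma coef_filter: "coef (filter (\<lambda>p. P (fst p)) xs) k = (if P k then coef xs k else 0)"
  by (induction xs) auto

lemma sum_list_map_set: "distinct xs \<Longrightarrow> sum_list (map f xs) = sum f (set xs)"
  by (simp add: sum_list_distinct_conv_sum_set)

section \<open>Monomials\<close>

type_synonym mon = "nat \<Rightarrow>\<^sub>0 nat"

definition mdeg :: "mon \<Rightarrow> nat" where "mdeg m = sum (Poly_Mapping.lookup m) (Poly_Mapping.keys m)"
definition mev :: "(nat \<Rightarrow> 'r::comm_ring_1) \<Rightarrow> mon \<Rightarrow> 'r" where
  "mev x m = (\<Prod>i\<in>Poly_Mapping.keys m. x i ^ Poly_Mapping.lookup m i)"
abbreviation e :: "nat \<Rightarrow> mon" where "e i \<equiv> Poly_Mapping.single i 1"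

lemma mdeg_superset: "finite S \<Longrightarrow> Poly_Mapping.keys m \<subseteq> S \<Longrightarrow> mdeg m = (\<Sum>i\<in>S. Poly_Mapping.lookup m i)"
  unfolding mdeg_def by (rule sum.mono_neutral_left) (auto simp: in_keys_iff)
lemma mono_superset: "finite S \<Longrightarrow> Poly_Mapping.keys m \<subseteq> S \<Longrightarrow> mev x m = (\<Prod>i\<in>S. x i ^ Poly_Mapping.lookup m i)"
  unfolding mev_def by (rule prod.mono_neutral_left) (auto simp: in_keys_iff)

lemma keys_add_sub: "Poly_Mapping.keys (m + n) \<subseteq> Poly_Mapping.keys m \<union> Poly_Mapping.keys (n::mon)"
  by (auto simp: in_keys_iff lookup_add)

lemma mdeg_add[simp]: "mdeg (m + n) = mdeg m + mdeg n"
proof -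
  let ?S = "Poly_Mapping.keys m \<union> Poly_Mapping.keys n"
  have "mdeg (m+n) = (\<Sum>i\<in>?S. Poly_Mapping.lookup (m+n) i)" using keys_add_sub by (intro mdeg_superset) auto
  also have "\<dots> = (\<Sum>i\<in>?S. Poly_Mapping.lookup m i) + (\<Sum>i\<in>?S. Poly_Mapping.lookup n i)" by (simp add: lookup_add sum.distrib)
  also have "\<dots> = mdeg m + mdeg n" by (subst (1 2) mdeg_superset[of ?S]) auto
  finally show ?thesis .
qed

lemma mono_add: "mev x (m + n) = mev x m * mev x n"
proof -
  let ?S = "Poly_Mapping.keys m \<union> Poly_Mapping.keys n"
  have "mev x (m+n) = (\<Prod>i\<in>?S. x i ^ Poly_Mapping.lookup (m+n) i)" using keys_add_sub by (intro mono_superset) auto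
  also have "\<dots> = (\<Prod>i\<in>?S. x i ^ Poly_Mapping.lookup m i) * (\<Prod>i\<in>?S. x i ^ Poly_Mapping.lookup n i)" by (simp add: lookup_add power_add prod.distrib)
  also have "\<dots> = mev x m * mev x n" by (subst (1 2) mono_superset[of ?S]) auto
  finally show ?thesis .
qed

lemma mdeg_0[simp]: "mdeg 0 = 0" by (simp add: mdeg_def)
lemma mono_0[simp]: "mev x 0 = 1" by (simp add: mev_def)
lemma mdeg_single[simp]: "mdeg (Poly_Mapping.single i n) = n" by (simp add: mdeg_def)
lemma mono_single[simp]: "mev x (Poly_Mapping.single i n) = x i ^ n" by (simp add: mev_def)
lemma mdeg_eq0: "mdeg m = 0 \<longleftrightarrow> m = 0"
  by (auto simp: mdeg_def in_keys_iff poly_mapping_eq_iff fun_eq_iff)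

lemma sub_e_add: "i \<in> Poly_Mapping.keys m \<Longrightarrow> (m - e i) + e i = m"
  by (rule poly_mapping_eqI) (auto simp: lookup_add lookup_minus lookup_single in_keys_iff when_def)
lemma add_e_sub: "(m + e i) - e i = m"
  by (rule poly_mapping_eqI) (auto simp: lookup_add lookup_minus lookup_single when_def)
lemma mdeg_sub_e1: "i \<in> Poly_Mapping.keys m \<Longrightarrow> mdeg m = mdeg (m - e i) + 1"
  by (metis sub_e_add mdeg_add mdeg_single)
lemma mdeg_sub_e: "i \<in> Poly_Mapping.keys m \<Longrightarrow> mdeg (m - e i) = mdeg m - 1"
  using mdeg_sub_e1 by fastforce
lemma mdeg_pos: "i \<in> Poly_Mapping.keys m \<Longrightarrow> mdeg m \<ge> 1"
  using mdeg_sub_e1 by fastforce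


lemma lcv_map_list: "distinct js \<Longrightarrow> lcv val (map (\<lambda>i. (g i, f i)) js) = (\<Sum>i\<in>set js. f i * val (g i))"
  by (induction js) auto
lemma coef_map_list: "distinct js \<Longrightarrow> coef (map (\<lambda>i. (g i, f i)) js) key = (\<Sum>i\<in>set js. if g i = key then f i else 0)"
  by (induction js) auto

definition good :: "'r set \<Rightarrow> ('k \<Rightarrow> bool) \<Rightarrow> ('k \<times> 'r) list \<Rightarrow> bool" where
  "good K Q ys \<longleftrightarrow> (\<forall>(k,c)\<in>set ys. Q k \<and> c \<in> K)"
definition gs :: "'r::comm_ring_1 set \<Rightarrow> ('k \<Rightarrow> 'r) \<Rightarrow> ('k \<Rightarrow> bool) \<Rightarrow> 'r set" where
  "gs K val Q = {lcv val ys | ys. good K Q ys}"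

lemma good_append[simp]: "good K Q (xs @ ys) \<longleftrightarrow> good K Q xs \<and> good K Q ys" by (auto simp: good_def)
lemma good_Nil[simp]: "good K Q []" by (auto simp: good_def)
lemma good_concat: "(\<And>xs. xs \<in> set xss \<Longrightarrow> good K Q xs) \<Longrightarrow> good K Q (concat xss)" by (auto simp: good_def)

context pds begin

lemma coef_K: "good K Q xs \<Longrightarrow> coef xs k \<in> K"
  by (induction xs) (auto simp: good_def)

lemma gs_0[simp]: "0 \<in> gs K val Q" by (auto simp: gs_def intro!: exI[of _ "[]"])
lemma gs_add: "x \<in> gs K val Q \<Longrightarrow> y \<in> gs K val Q \<Longrightarrow> x + y \<in> gs K val Q"
  by (auto simp: gs_def) (metis good_append lcv_append)
lemma gs_scale: "s \<in> K \<Longrightarrow> x \<in> gs K val Q \<Longrightarrow> s * x \<in> gs K val Q"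
proof -
  assume s: "s \<in> K" and "x \<in> gs K val Q"
  then obtain ys where ys: "good K Q ys" "x = lcv val ys" by (auto simp: gs_def)
  have "good K Q (map (\<lambda>(k,c). (k, s*c)) ys)" using ys s by (auto simp: good_def)
  then show ?thesis using ys lcv_scale[of val s ys] unfolding gs_def by (metis (mono_tags, lifting) mem_Collect_eq)
qed
lemma gs_single: "Q k \<Longrightarrow> c \<in> K \<Longrightarrow> c * val k \<in> gs K val Q"
  by (auto simp: gs_def good_def intro!: exI[of _ "[(k,c)]"])
lemma gs_sum: "(\<And>i. i \<in> I \<Longrightarrow> f i \<in> gs K val Q) \<Longrightarrow> sum f I \<in> gs K val Q"
  by (induction I rule: infinite_finite_induct) (auto intro: gs_add)
lemma gs_mono: "x \<in> gs K val Q \<Longrightarrow> (\<And>k. Q k \<Longrightarrow> Q' k) \<Longrightarrow> x \<in> gs K val Q'"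
  unfolding gs_def good_def by fastforce
lemma gs_mult_z: "x \<in> gs K (mev z) Q \<Longrightarrow> (\<And>m. Q m \<Longrightarrow> Q' (m + e j)) \<Longrightarrow> x * z j \<in> gs K (mev z) Q'"
proof -
  assume "x \<in> gs K (mev z) Q" and QQ: "\<And>m. Q m \<Longrightarrow> Q' (m + e j)"
  then obtain ys where ys: "good K Q ys" "x = lcv (mev z) ys" by (auto simp: gs_def)
  let ?ys = "map (\<lambda>(m,c). (m + e j, c)) ys"
  have "good K Q' ?ys" using ys QQ by (auto simp: good_def)
  moreover have "lcv (mev z) ?ys = lcv (mev z) ys * z j"
    by (induction ys) (auto simp: mono_add algebra_simps)
  ultimately show ?thesis using ys unfolding gs_def by (metis (mono_tags, lifting) mem_Collect_eq)
qed

end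

locale pshift = pds K \<phi> \<delta> for K :: "'r::comm_ring_1 set" and \<phi> \<delta> +
  fixes z b :: "nat \<Rightarrow> 'r"
  assumes bK: "b i \<in> K" and phz: "\<phi> (z i) = z i + b i"
begin

definition Dm :: "mon \<Rightarrow> 'r" where
  "Dm m = (\<Sum>i\<in>Poly_Mapping.keys m. of_nat (Poly_Mapping.lookup m i) * b i * mev z (m - e i))"

lemma Dm_superset: "finite S \<Longrightarrow> Poly_Mapping.keys m \<subseteq> S \<Longrightarrow>
   Dm m = (\<Sum>i\<in>S. of_nat (Poly_Mapping.lookup m i) * b i * mev z (m - e i))"
  unfolding Dm_def by (rule sum.mono_neutral_left) (auto simp: in_keys_iff)

lemma phi_mono: "\<phi> (mev z m) = mev (\<lambda>i. z i + b i) m"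
  by (simp add: mev_def phi_prod phz)

lemma Dm_step:
  assumes j: "j \<in> Poly_Mapping.keys m" and m': "m' = m - e j"
  shows "Dm m = b j * mev z m' + Dm m' * z j"
proof -
  let ?S = "Poly_Mapping.keys m"
  have mm: "m = m' + e j" using sub_e_add[OF j] m' by simp
  have sub: "Poly_Mapping.keys m' \<subseteq> ?S" using mm by (auto simp: in_keys_iff lookup_add)
  have lk: "\<And>k. Poly_Mapping.lookup m k = Poly_Mapping.lookup m' k + (if k = j then 1 else 0)"
    using mm by (simp add: lookup_add lookup_single when_def)
  have trm: "of_nat (Poly_Mapping.lookup m i) * b i * mev z (m - e i)
     = of_nat (Poly_Mapping.lookup m' i) * b i * mev z (m' - e i) * z j + (if i = j then b j * mev z m' else 0)" for i
  proof (cases "i = j")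
    case True
    have e1: "m - e i = m'" using True mm add_e_sub by simp
    show ?thesis
    proof (cases "Poly_Mapping.lookup m' j = 0")
      case True
      then show ?thesis using \<open>i = j\<close> e1 lk[of j] by simp
    next
      case False
      then have "j \<in> Poly_Mapping.keys m'" by (simp add: in_keys_iff)
      then have h: "mev z (m' - e j) * z j = mev z m'" using sub_e_add[of j m'] mono_add[of z "m' - e j" "e j"] by simp
      have "of_nat (Poly_Mapping.lookup m i) * b i * mev z (m - e i) = (of_nat (Poly_Mapping.lookup m' j) + 1) * b j * mev z m'"
        using True e1 lk[of j] by (simp add: add.commute)
      also have "\<dots> = of_nat (Poly_Mapping.lookup m' j) * b j * mev z m' + b j * mev z m'" by (simp add: algebra_simps)
      also have "\<dots> = of_nat (Poly_Mapping.lookup m' j) * b j * mev z (m' - e j) * z j + b j * mev z m'" using h by (metis mult.assoc)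
      finally show ?thesis using True by simp
    qed
  next
    case False
    show ?thesis
    proof (cases "Poly_Mapping.lookup m' i = 0")
      case True then show ?thesis using lk[of i] False by simp
    next
      case ne: False
      have "m - e i = (m' - e i) + e j"
        by (rule poly_mapping_eqI) (use ne False lk in \<open>auto simp: lookup_add lookup_minus lookup_single when_def\<close>)
      then have "mev z (m - e i) = mev z (m' - e i) * z j" by (simp add: mono_add)
      then show ?thesis using lk[of i] False by (simp add: mult.assoc)
    qed
  qed
  have "Dm m = (\<Sum>i\<in>?S. of_nat (Poly_Mapping.lookup m' i) * b i * mev z (m' - e i) * z j + (if i = j then b j * mev z m' else 0))"
    unfolding Dm_def using trm by (rule sum.cong[OF refl])
  also have "\<dots> = (\<Sum>i\<in>?S. of_nat (Poly_Mapping.lookup m' i) * b i * mev z (m' - e i)) * z j + b j * mev z m'"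
    using j by (simp add: sum.distrib sum_distrib_right sum.delta)
  also have "(\<Sum>i\<in>?S. of_nat (Poly_Mapping.lookup m' i) * b i * mev z (m' - e i)) = Dm m'"
    using sub by (simp add: Dm_superset[of "Poly_Mapping.keys m" m'])
  finally show ?thesis by (simp add: add.commute)
qed

lemma expand_n: "mdeg m = n \<Longrightarrow> \<phi> (mev z m) - mev z m - Dm m \<in> gs K (mev z) (\<lambda>m'. mdeg m' + 2 \<le> mdeg m)"
proof (induction n arbitrary: m)
  case 0
  then have "m = 0" by (simp add: mdeg_eq0)
  then show ?case by (simp add: Dm_def)
next
  case (Suc n)
  then have "m \<noteq> 0" by auto
  then obtain j where j: "j \<in> Poly_Mapping.keys m" by (metis keys_eq_empty ex_in_conv)
  define m' where "m' = m - e j"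
  have mm: "m = m' + e j" using sub_e_add[OF j] m'_def by simp
  have dm': "mdeg m' = n" using Suc.prems mm by simp
  define r where "r = \<phi> (mev z m') - mev z m' - Dm m'"
  have r: "r \<in> gs K (mev z) (\<lambda>m''. mdeg m'' + 2 \<le> n)" using Suc.IH[OF dm'] dm' r_def by simp
  have phm: "\<phi> (mev z m) = \<phi> (mev z m') * (z j + b j)"
    using mm by (simp add: mono_add phz)
  have Dmj: "Dm m = b j * mev z m' + Dm m' * z j" using Dm_step[OF j m'_def] .
  have eq: "\<phi> (mev z m) - mev z m - Dm m = Dm m' * b j + r * z j + r * b j"
    unfolding phm Dmj r_def using mm by (simp add: mono_add algebra_simps)
  have A: "Dm m' * b j \<in> gs K (mev z) (\<lambda>m'. mdeg m' + 2 \<le> mdeg m)"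
    unfolding Dm_def sum_distrib_right
  proof (rule gs_sum)
    fix i assume i: "i \<in> Poly_Mapping.keys m'"
    have eq: "of_nat (Poly_Mapping.lookup m' i) * b i * mev z (m' - e i) * b j
          = (of_nat (Poly_Mapping.lookup m' i) * b i * b j) * mev z (m' - e i)" by (simp add: algebra_simps)
    have dg: "mdeg (m' - e i) + 2 \<le> mdeg m" using mdeg_sub_e1[OF i] dm' Suc.prems by simp
    show "of_nat (Poly_Mapping.lookup m' i) * b i * mev z (m' - e i) * b j \<in> gs K (mev z) (\<lambda>m'. mdeg m' + 2 \<le> mdeg m)"
      unfolding eq by (rule gs_single) (use dg bK in auto)
  qed
  have B: "r * z j \<in> gs K (mev z) (\<lambda>m'. mdeg m' + 2 \<le> mdeg m)"
    by (rule gs_mult_z[OF r]) (use Suc.prems in simp)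
  have C: "r * b j \<in> gs K (mev z) (\<lambda>m'. mdeg m' + 2 \<le> mdeg m)"
    by (rule gs_mono[OF gs_scale[OF bK r, of j, unfolded mult.commute[of "b j"]]]) (use Suc.prems in simp)
  show ?case unfolding eq using A B C by (intro gs_add)
qed

lemma expand: "\<exists>ys. good K (\<lambda>m'. mdeg m' + 2 \<le> mdeg m) ys \<and> lcv (mev z) ys = \<phi> (mev z m) - mev z m - Dm m"
  using expand_n[of m "mdeg m"] by (auto simp: gs_def)

end


lemma finite_coef_nz: "finite {k. coef xs k \<noteq> 0}"
  by (rule finite_subset[of _ "fst ` set xs"]) (auto intro: coef_notin ccontr)

lemma lcv_coef_S: "lcv val xs = (\<Sum>key\<in>{k. coef xs k \<noteq> 0}. coef xs key * val key)"
proof -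
  have "lcv val xs = (\<Sum>key\<in>fst ` set xs. coef xs key * val key)" by (rule lcv_coef) auto
  also have "\<dots> = (\<Sum>key\<in>{k. coef xs k \<noteq> 0}. coef xs key * val key)"
    by (rule sum.mono_neutral_right) (auto intro: coef_notin ccontr)
  finally show ?thesis .
qed

lemma lcv_concat_set: "distinct sl \<Longrightarrow> lcv val (concat (map f sl)) = (\<Sum>key\<in>set sl. lcv val (f key))"
  by (simp add: lcv_concat sum_list_distinct_conv_sum_set)
lemma coef_concat_set: "distinct sl \<Longrightarrow> coef (concat (map f sl)) k = (\<Sum>key\<in>set sl. coef (f key) k)"
  by (simp add: coef_concat sum_list_distinct_conv_sum_set)

locale pcore = pshift K \<phi> \<delta> z b for K :: "'r::comm_ring_1 set" and \<phi> \<delta> z b +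
  fixes V Vi \<alpha> ai :: 'r and A :: "nat set"
  assumes \<alpha>K: "\<alpha> \<in> K" and aiK: "ai \<in> K" and \<alpha>ai: "\<alpha> * ai = 1"
    and VVi: "V * Vi = 1" and phV: "\<phi> V = \<alpha> * V"
begin

definition valM :: "nat \<times> mon \<Rightarrow> 'r" where "valM key = V ^ fst key * mev z (snd key)"

definition Rel :: "nat \<Rightarrow> ((nat \<times> mon) \<times> 'r) list \<Rightarrow> bool" where
  "Rel d xs \<longleftrightarrow> good K (\<lambda>(k,m). k \<in> A \<and> mdeg m \<le> d) xs \<and> lcv valM xs = 0 \<and> (\<exists>key. coef xs key \<noteq> 0)"

lemma lcv_lift: "lcv valM (map (\<lambda>(m',c'). ((k,m'), s*c')) ys) = s * V^k * lcv (mev z) ys"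
  by (induction ys) (auto simp: valM_def algebra_simps)

lemma phi_valM: "\<phi> (valM (k,m)) = \<alpha>^k * V^k * \<phi> (mev z m)"
  by (simp add: valM_def phV power_mult_distrib)

lemma Vpow_nz: "V ^ k \<noteq> 0"
proof
  assume "V^k = 0"
  then have "V^k * Vi^k = 0" by simp
  moreover have "V^k * Vi^k = 1" using VVi by (simp add: power_mult_distrib[symmetric])
  ultimately show False by simp
qed

lemma core:
  assumes R0: "Rel d0 xs0"
  shows "(\<exists>N c f. (\<forall>i\<le>N. c i \<in> K \<and> \<phi> (c i) = c i) \<and> (\<exists>i\<le>N. c i \<noteq> 0) \<and> f \<in> K \<and> (\<Sum>i\<le>N. c i * b i) = \<phi> f - f)
       \<or> (\<exists>k0 k1 ee. k0 \<in> A \<and> k1 \<in> A \<and> k0 \<noteq> k1 \<and> ee \<in> K \<and> ee \<noteq> 0 \<and> \<alpha>^k1 * \<phi> ee = \<alpha>^k0 * ee)"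
proof -
  define d where "d = (LEAST d. \<exists>xs. Rel d xs)"
  have Rd: "\<exists>xs. Rel d xs" unfolding d_def by (rule LeastI) (use R0 in blast)
  have dmin: "\<not> Rel d' xs" if "d' < d" for d' xs using not_less_Least[of d' "\<lambda>d. \<exists>xs. Rel d xs"] that d_def by blast
  \<comment> \<open>independence below the top degree\<close>
  have indep: "coef xs key = 0"
    if g: "good K (\<lambda>(k,m). k \<in> A \<and> mdeg m \<le> d) xs" and l: "lcv valM xs = 0"
      and t: "\<And>key. mdeg (snd key) = d \<Longrightarrow> coef xs key = 0" for xs key
  proof (rule ccontr)
    assume nz: "coef xs key \<noteq> 0"
    define xs' where "xs' = filter (\<lambda>p. mdeg (snd (fst p)) < d) xs"
    have cx: "coef xs' k = coef xs k" for k
    proof -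
      have "coef xs' k = (if mdeg (snd k) < d then coef xs k else 0)"
        unfolding xs'_def by (rule coef_filter[where P="\<lambda>k. mdeg (snd k) < d"])
      moreover have "coef xs k = 0" if "\<not> mdeg (snd k) < d"
      proof (cases "mdeg (snd k) = d")
        case True then show ?thesis using t by simp
      next
        case False
        then have "k \<notin> fst ` set xs" using that g by (auto simp: good_def)
        then show ?thesis by (rule coef_notin)
      qed
      ultimately show ?thesis by auto
    qed
    have "lcv valM xs' = lcv valM xs" using cx by (simp add: lcv_coef_S)
    then have l': "lcv valM xs' = 0" using l by simp
    have g': "good K (\<lambda>(k,m). k \<in> A \<and> mdeg m < d) xs'" using g by (auto simp: good_def xs'_def)
    show False
    proof (cases "d = 0")
      case True
      then have "xs' = []" using g' by (cases xs') (auto simp: good_def)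
      then show False using cx[of key] nz by simp
    next
      case False
      have "good K (\<lambda>(k,m). k \<in> A \<and> mdeg m \<le> d - 1) xs'" using g' False by (auto simp: good_def)
      moreover have "\<exists>key. coef xs' key \<noteq> 0" using cx[of key] nz by (metis prod.exhaust)
      ultimately have "Rel (d - 1) xs'" unfolding Rel_def using l' by blast
      then show False using dmin[of "d - 1"] False by simp
    qed
  qed
  define topS where "topS (xs::((nat \<times> mon) \<times> 'r) list) = {key. mdeg (snd key) = d \<and> coef xs key \<noteq> 0}" for xs
  have fin_top: "finite (topS xs)" for xs
    unfolding topS_def by (rule finite_subset[OF _ finite_coef_nz[of xs]]) blast
  have top_ne: "topS xs \<noteq> {}" if "Rel d xs" for xs
  proof
    assume e: "topS xs = {}"
    have "coef xs key = 0" for key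
    proof (rule indep)
      show "good K (\<lambda>(k,m). k \<in> A \<and> mdeg m \<le> d) xs" using that unfolding Rel_def by blast
      show "lcv valM xs = 0" using that unfolding Rel_def by blast
      show "coef xs key' = 0" if "mdeg (snd key') = d" for key' using e that unfolding topS_def by blast
    qed
    then show False using that unfolding Rel_def by blast
  qed
  obtain xs1 where R1: "Rel d xs1" and tmin1: "\<And>ys. Rel d ys \<Longrightarrow> card (topS xs1) \<le> card (topS ys)"
  proof -
    define n where "n = (LEAST n. \<exists>xs. Rel d xs \<and> card (topS xs) = n)"
    have "\<exists>xs. Rel d xs \<and> card (topS xs) = n" unfolding n_def by (rule LeastI_ex) (use Rd in blast)
    then obtain xs1 where "Rel d xs1" "card (topS xs1) = n" by blast
    moreover have "n \<le> card (topS ys)" if "Rel d ys" for ys unfolding n_def by (rule Least_le) (use that in blast)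
    ultimately show ?thesis using that by auto
  qed
  obtain k0 m0 where key0: "(k0,m0) \<in> topS xs1" using top_ne[OF R1] by auto
  have c0K: "coef xs1 (k0,m0) \<in> K" using R1 by (auto simp: Rel_def intro: coef_K)
  obtain ci where ciK: "ci \<in> K" and ci: "coef xs1 (k0,m0) * ci = 1"
    using Kinv[OF c0K] key0 by (auto simp: topS_def)
  define xs where "xs = map (\<lambda>(k,c). (k, ci*c)) xs1"
  define c where "c = coef xs"
  have c_eq: "c key = ci * coef xs1 key" for key unfolding c_def xs_def by (rule coef_scale)
  have ci_nz: "ci * y \<noteq> 0" if "y \<noteq> 0" for y
  proof
    assume "ci * y = 0"
    moreover have "y = coef xs1 (k0,m0) * (ci * y)" using ci by (metis mult.assoc mult_1)
    ultimately show False using that by (metis mult_zero_right)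
  qed
  have "coef xs key \<noteq> 0 \<longleftrightarrow> coef xs1 key \<noteq> 0" for key
    using ci_nz[of "coef xs1 key"] c_eq[of key] unfolding c_def by auto
  then have top_eq: "topS xs = topS xs1" unfolding topS_def by blast
  have gxs: "good K (\<lambda>(k,m). k \<in> A \<and> mdeg m \<le> d) xs"
    using R1 ciK by (auto simp: Rel_def xs_def good_def)
  have lxs: "lcv valM xs = 0" using R1 by (simp add: xs_def lcv_scale Rel_def)
  have c_key0: "c (k0,m0) = 1" using c_eq ci by (simp add: mult.commute)
  have Rxs: "Rel d xs" unfolding Rel_def using gxs lxs c_key0[unfolded c_def] by (metis one_neq_zero)
  have tmin: "card (topS xs) \<le> card (topS ys)" if "Rel d ys" for ys using tmin1[OF that] top_eq by simp
  have dm0: "mdeg m0 = d" using key0 by (simp add: topS_def)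
  define S where "S = {key. c key \<noteq> 0}"
  have finS: "finite S" unfolding S_def c_def by (fact finite_coef_nz)
  have S_prop: "fst key \<in> A \<and> mdeg (snd key) \<le> d" if "key \<in> S" for key
  proof -
    have "key \<in> fst ` set xs" using that coef_notin[of key xs] unfolding S_def c_def by blast
    then show ?thesis using gxs by (auto simp: good_def)
  qed
  have cK: "c key \<in> K" for key unfolding c_def by (rule coef_K[OF gxs])
  have key0S: "(k0,m0) \<in> S" using c_key0 by (simp add: S_def)
  have val0: "(\<Sum>key\<in>S. c key * valM key) = 0" using lxs by (simp add: lcv_coef_S S_def c_def)
  define \<beta> where "\<beta> k = \<alpha>^k * ai^k0" for k
  have \<beta>K: "\<beta> k \<in> K" for k by (simp add: \<beta>_def \<alpha>K aiK)
  have \<beta>0: "\<beta> k0 = 1" using \<alpha>ai by (simp add: \<beta>_def power_mult_distrib[symmetric])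
  have "\<forall>m. \<exists>ys. good K (\<lambda>m'. mdeg m' + 2 \<le> mdeg m) ys \<and> lcv (mev z) ys = \<phi> (mev z m) - mev z m - Dm m"
    using expand by blast
  then obtain R where R: "\<And>m. good K (\<lambda>m'. mdeg m' + 2 \<le> mdeg m) (R m)"
      "\<And>m. lcv (mev z) (R m) = \<phi> (mev z m) - mev z m - Dm m" by metis
  obtain sl where sl: "distinct sl" "set sl = S" using finite_distinct_list[OF finS] by blast
  define ks where "ks m = sorted_list_of_set (Poly_Mapping.keys m)" for m :: mon
  have ks: "distinct (ks m)" "set (ks m) = Poly_Mapping.keys m" for m by (auto simp: ks_def)
  define w where "w key = \<beta> (fst key) * \<phi> (c key)" for key
  have wK: "w key \<in> K" for key using \<beta>K cK by (simp add: w_def)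
  have w0: "c key = 0 \<Longrightarrow> w key = 0" for key by (simp add: w_def)
  define lq where "lq = map (\<lambda>key. (key, w key - c key)) sl"
  define LD where "LD = concat (map (\<lambda>key. map (\<lambda>i. ((fst key, snd key - e i),
        w key * of_nat (Poly_Mapping.lookup (snd key) i) * b i)) (ks (snd key))) sl)"
  define LR where "LR = concat (map (\<lambda>key. map (\<lambda>(m',c'). ((fst key, m'), w key * c')) (R (snd key))) sl)"
  define L where "L = lq @ LD @ LR"
  have glq: "good K (\<lambda>(k,m). k \<in> A \<and> mdeg m \<le> d) lq"
    unfolding good_def lq_def using S_prop sl wK cK by auto
  have gLD: "good K (\<lambda>(k,m). k \<in> A \<and> mdeg m + 1 \<le> d) LD"
    unfolding good_def
  proof (intro ballI)
    fix p assume "p \<in> set LD"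
    then obtain key i where key: "key \<in> S" and i: "i \<in> Poly_Mapping.keys (snd key)"
      and p: "p = ((fst key, snd key - e i), w key * of_nat (Poly_Mapping.lookup (snd key) i) * b i)"
      unfolding LD_def using sl ks by auto
    have "mdeg (snd key - e i) + 1 \<le> d" using mdeg_sub_e1[OF i] S_prop[OF key] by simp
    then show "case p of (k, c) \<Rightarrow> (case k of (k, m) \<Rightarrow> k \<in> A \<and> mdeg m + 1 \<le> d) \<and> c \<in> K"
      using p S_prop[OF key] wK bK by simp
  qed
  have gLR: "good K (\<lambda>(k,m). k \<in> A \<and> mdeg m + 2 \<le> d) LR"
    unfolding good_def
  proof (intro ballI)
    fix p assume "p \<in> set LR"
    then obtain key m' c' where key: "key \<in> S" and mc: "(m',c') \<in> set (R (snd key))"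
      and p: "p = ((fst key, m'), w key * c')"
      unfolding LR_def using sl by auto
    have "mdeg m' + 2 \<le> mdeg (snd key)" "c' \<in> K" using R(1)[of "snd key"] mc by (auto simp: good_def)
    then show "case p of (k, c) \<Rightarrow> (case k of (k, m) \<Rightarrow> k \<in> A \<and> mdeg m + 2 \<le> d) \<and> c \<in> K"
      using p S_prop[OF key] wK by auto
  qed
  have gL: "good K (\<lambda>(k,m). k \<in> A \<and> mdeg m \<le> d) L"
    unfolding L_def good_append using glq gLD gLR by (auto simp: good_def)
  have lcv_lq: "lcv valM lq = (\<Sum>key\<in>S. (w key - c key) * valM key)"
    unfolding lq_def using sl by (simp add: lcv_keys_list)
  have lcv_LD: "lcv valM LD = (\<Sum>key\<in>S. w key * V ^ fst key * Dm (snd key))"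
    unfolding LD_def lcv_concat_set[OF sl(1)] sl(2)
  proof (rule sum.cong[OF refl])
    fix key assume "key \<in> S"
    have "lcv valM (map (\<lambda>i. ((fst key, snd key - e i), w key * of_nat (Poly_Mapping.lookup (snd key) i) * b i)) (ks (snd key)))
        = (\<Sum>i\<in>Poly_Mapping.keys (snd key). w key * of_nat (Poly_Mapping.lookup (snd key) i) * b i * valM (fst key, snd key - e i))"
      using lcv_map_list[OF ks(1), of valM "\<lambda>i. (fst key, snd key - e i)"] ks(2) by simp
    also have "\<dots> = w key * V ^ fst key * Dm (snd key)"
      unfolding Dm_def sum_distrib_left by (rule sum.cong[OF refl]) (simp add: valM_def algebra_simps)
    finally show "lcv valM (map (\<lambda>i. ((fst key, snd key - e i), w key * of_nat (Poly_Mapping.lookup (snd key) i) * b i)) (ks (snd key)))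
        = w key * V ^ fst key * Dm (snd key)" .
  qed
  have lcv_LR: "lcv valM LR = (\<Sum>key\<in>S. w key * V ^ fst key * (\<phi> (mev z (snd key)) - mev z (snd key) - Dm (snd key)))"
    unfolding LR_def lcv_concat_set[OF sl(1)] sl(2)
    by (rule sum.cong[OF refl]) (simp add: lcv_lift R(2))
  have lL: "lcv valM L = 0"
  proof -
    have "lcv valM L = (\<Sum>key\<in>S. w key * V ^ fst key * \<phi> (mev z (snd key)) - c key * valM key)"
      unfolding L_def lcv_append lcv_lq lcv_LD lcv_LR sum.distrib[symmetric]
      by (rule sum.cong[OF refl]) (simp add: valM_def algebra_simps)
    also have "\<dots> = (\<Sum>key\<in>S. ai ^ k0 * \<phi> (c key * valM key)) - (\<Sum>key\<in>S. c key * valM key)"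
      unfolding sum_subtractf
    proof (intro arg_cong2[where f="(-)"] sum.cong refl)
      fix key assume "key \<in> S"
      obtain k m where km: "key = (k,m)" by force
      show "w key * V ^ fst key * \<phi> (mev z (snd key)) = ai ^ k0 * \<phi> (c key * valM key)"
        unfolding km w_def \<beta>_def using phi_valM[of k m] by (simp add: algebra_simps)
    qed
    also have "(\<Sum>key\<in>S. ai ^ k0 * \<phi> (c key * valM key)) = ai ^ k0 * \<phi> (\<Sum>key\<in>S. c key * valM key)"
      by (simp only: phi_sum sum_distrib_left)
    also have "ai ^ k0 * \<phi> (\<Sum>key\<in>S. c key * valM key) - (\<Sum>key\<in>S. c key * valM key) = 0"
      unfolding val0 by simp
    finally show ?thesis .
  qed
  have coef_top: "coef L key = w key - c key" if "mdeg (snd key) = d" for key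
  proof -
    have "coef LD key = 0" by (rule coef_notin) (use gLD that in \<open>auto simp: good_def\<close>)
    moreover have "coef LR key = 0" by (rule coef_notin) (use gLR that in \<open>auto simp: good_def\<close>)
    moreover have "coef lq key = w key - c key"
      unfolding lq_def coef_keys_list[OF sl(1)] sl(2) using w0[of key] S_def by auto
    ultimately show ?thesis by (simp add: L_def)
  qed
  have w_key0: "w (k0,m0) = c (k0,m0)" using \<beta>0 c_key0 by (simp add: w_def)
  have inv: "w key = c key" if "mdeg (snd key) = d" for key
  proof (rule ccontr)
    assume ne: "w key \<noteq> c key"
    have "coef L key \<noteq> 0" using coef_top[OF that] ne by simp
    then have RL: "Rel d L" unfolding Rel_def using gL lL by blast
    have sub: "topS L \<subseteq> topS xs - {(k0,m0)}"
    proof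
      fix key' assume "key' \<in> topS L"
      then have d': "mdeg (snd key') = d" and "coef L key' \<noteq> 0" unfolding topS_def by auto
      then have nz: "w key' - c key' \<noteq> 0" using coef_top[OF d'] by simp
      then have "c key' \<noteq> 0" using w0[of key'] by auto
      moreover have "key' \<noteq> (k0,m0)" using nz w_key0 by auto
      ultimately show "key' \<in> topS xs - {(k0,m0)}" using d' unfolding topS_def c_def by simp
    qed
    have "(k0,m0) \<in> topS xs" using key0 top_eq by simp
    then have "topS L \<subset> topS xs" using sub by blast
    then have "card (topS L) < card (topS xs)" using fin_top by (rule psubset_card_mono[rotated])
    then show False using tmin[OF RL] by simp
  qed
  show ?thesis
  proof (cases "d = 0")
    case True
    have S0: "snd key = 0" if "key \<in> S" for key using S_prop[OF that] True by (simp add: mdeg_eq0)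
    have "\<exists>key1\<in>S. key1 \<noteq> (k0,m0)"
    proof (rule ccontr)
      assume a: "\<not> (\<exists>key1\<in>S. key1 \<noteq> (k0,m0))"
      have "S = {(k0,m0)}" using key0S a by blast
      then have "c (k0,m0) * valM (k0,m0) = 0" using val0 by simp
      moreover have "m0 = 0" using S0[OF key0S] by simp
      ultimately have "V ^ k0 = 0" using c_key0 by (simp add: valM_def)
      then show False using Vpow_nz by simp
    qed
    then obtain k1 m1 where k1S: "(k1,m1) \<in> S" and ne: "(k1,m1) \<noteq> (k0,m0)" by auto
    have m1: "m1 = 0" and m0: "m0 = 0" using S0[OF k1S] S0[OF key0S] by auto
    have k1ne: "k1 \<noteq> k0" using ne m1 m0 by simp
    have "w (k1,m1) = c (k1,m1)" using inv[of "(k1,m1)"] m1 True by simp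
    then have "\<alpha>^k1 * ai^k0 * \<phi> (c (k1,m1)) = c (k1,m1)" by (simp add: w_def \<beta>_def)
    then have H: "\<alpha>^k0 * (\<alpha>^k1 * ai^k0 * \<phi> (c (k1,m1))) = \<alpha>^k0 * c (k1,m1)" by simp
    have H1: "\<alpha>^k0 * ai^k0 = 1" using \<alpha>ai by (simp add: power_mult_distrib[symmetric])
    have "\<alpha>^k1 * \<phi> (c (k1,m1)) = (\<alpha>^k0 * ai^k0) * (\<alpha>^k1 * \<phi> (c (k1,m1)))" using H1 by simp
    also have "\<dots> = \<alpha>^k0 * (\<alpha>^k1 * ai^k0 * \<phi> (c (k1,m1)))" by (simp add: ac_simps)
    finally have "\<alpha>^k1 * \<phi> (c (k1,m1)) = \<alpha>^k0 * c (k1,m1)" using H by simp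
    moreover have "k1 \<in> A" "k0 \<in> A" using S_prop[OF k1S] S_prop[OF key0S] by auto
    moreover have "c (k1,m1) \<noteq> 0" using k1S by (simp add: S_def)
    ultimately show ?thesis using k1ne cK by blast
  next
    case False
    then have "m0 \<noteq> 0" using dm0 by auto
    then obtain i0 where i0: "i0 \<in> Poly_Mapping.keys m0" by (metis keys_eq_empty ex_in_conv)
    define \<mu> where "\<mu> = m0 - e i0"
    have m0\<mu>: "m0 = \<mu> + e i0" using sub_e_add[OF i0] \<mu>_def by simp
    have d\<mu>: "mdeg \<mu> + 1 = d" using m0\<mu> dm0 by simp
    have zeroL: "coef L key = 0" for key
      by (rule indep[OF gL lL]) (use coef_top inv in simp)
    define N where "N = Max (insert i0 (\<Union>key\<in>S. Poly_Mapping.keys (snd key)))"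
    have finU: "finite (insert i0 (\<Union>key\<in>S. Poly_Mapping.keys (snd key)))" using finS by simp
    have i0N: "i0 \<le> N" unfolding N_def using finU by simp
    have keysN: "Poly_Mapping.keys (snd key) \<subseteq> {..N}" if "key \<in> S" for key
      unfolding N_def using finU that by (auto intro: Max_ge)
    define F where "F key i = w key * of_nat (Poly_Mapping.lookup (snd key) i) * b i" for key i
    have cLR: "coef LR (k0,\<mu>) = 0" by (rule coef_notin) (use gLR d\<mu> in \<open>auto simp: good_def\<close>)
    have clq: "coef lq (k0,\<mu>) = \<phi> (c (k0,\<mu>)) - c (k0,\<mu>)"
      unfolding lq_def coef_keys_list[OF sl(1)] sl(2) using w0[of "(k0,\<mu>)"] S_def \<beta>0 by (auto simp: w_def)
    have cLD: "coef LD (k0,\<mu>) = (\<Sum>i\<le>N. F (k0, \<mu> + e i) i)"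
    proof -
      have "coef LD (k0,\<mu>) = (\<Sum>key\<in>S. \<Sum>i\<in>Poly_Mapping.keys (snd key). if (fst key, snd key - e i) = (k0,\<mu>) then F key i else 0)"
        unfolding LD_def coef_concat_set[OF sl(1)] sl(2) F_def
        by (rule sum.cong[OF refl]) (simp add: coef_map_list[OF ks(1)] ks(2))
      also have "\<dots> = (\<Sum>key\<in>S. \<Sum>i\<le>N. if key = (k0, \<mu> + e i) then F key i else 0)"
      proof (rule sum.cong[OF refl])
        fix key assume kS: "key \<in> S"
        show "(\<Sum>i\<in>Poly_Mapping.keys (snd key). if (fst key, snd key - e i) = (k0,\<mu>) then F key i else 0)
            = (\<Sum>i\<le>N. if key = (k0, \<mu> + e i) then F key i else 0)"
        proof (rule sum.mono_neutral_cong_left)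
          show "finite {..N}" by simp
          show "Poly_Mapping.keys (snd key) \<subseteq> {..N}" using keysN[OF kS] .
          show "\<forall>i\<in>{..N} - Poly_Mapping.keys (snd key). (if key = (k0, \<mu> + e i) then F key i else 0) = 0"
          proof
            fix i assume "i \<in> {..N} - Poly_Mapping.keys (snd key)"
            then have "Poly_Mapping.lookup (snd key) i = 0" by (simp add: in_keys_iff)
            moreover have "Poly_Mapping.lookup (\<mu> + e i) i \<noteq> 0" by (simp add: lookup_add)
            ultimately show "(if key = (k0, \<mu> + e i) then F key i else 0) = 0" by auto
          qed
          fix i assume i: "i \<in> Poly_Mapping.keys (snd key)"
          have "(fst key, snd key - e i) = (k0,\<mu>) \<longleftrightarrow> key = (k0, \<mu> + e i)"
            using sub_e_add[OF i] add_e_sub[of \<mu> i] by (cases key) auto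
          then show "(if (fst key, snd key - e i) = (k0,\<mu>) then F key i else 0) = (if key = (k0, \<mu> + e i) then F key i else 0)"
            by simp
        qed
      qed
      also have "\<dots> = (\<Sum>i\<le>N. \<Sum>key\<in>S. if key = (k0, \<mu> + e i) then F key i else 0)"
        by (rule sum.swap)
      also have "\<dots> = (\<Sum>i\<le>N. F (k0, \<mu> + e i) i)"
      proof (rule sum.cong[OF refl])
        fix i
        have "(\<Sum>key\<in>S. if key = (k0, \<mu> + e i) then F key i else 0) = (if (k0, \<mu> + e i) \<in> S then F (k0, \<mu> + e i) i else 0)"
          using finS by (simp add: sum.delta')
        also have "\<dots> = F (k0, \<mu> + e i) i" using w0[of "(k0, \<mu> + e i)"] by (auto simp: S_def F_def)
        finally show "(\<Sum>key\<in>S. if key = (k0, \<mu> + e i) then F key i else 0) = F (k0, \<mu> + e i) i" .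
      qed
      finally show ?thesis .
    qed
    define C where "C i = of_nat (Poly_Mapping.lookup \<mu> i + 1) * c (k0, \<mu> + e i)" for i
    have F_C: "F (k0, \<mu> + e i) i = C i * b i" for i
    proof -
      have "w (k0, \<mu> + e i) = c (k0, \<mu> + e i)" using inv[of "(k0, \<mu> + e i)"] d\<mu> by simp
      then show ?thesis by (simp add: F_def C_def lookup_add algebra_simps)
    qed
    have "0 = coef L (k0,\<mu>)" using zeroL by simp
    also have "\<dots> = \<phi> (c (k0,\<mu>)) - c (k0,\<mu>) + (\<Sum>i\<le>N. C i * b i)"
      unfolding L_def coef_append cLR clq cLD F_C by simp
    finally have eq: "(\<Sum>i\<le>N. C i * b i) = \<phi> (- c (k0,\<mu>)) - (- c (k0,\<mu>))" by (simp add: algebra_simps)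
    have Cfix: "C i \<in> K \<and> \<phi> (C i) = C i" for i
    proof -
      have "w (k0, \<mu> + e i) = c (k0, \<mu> + e i)" using inv[of "(k0, \<mu> + e i)"] d\<mu> by simp
      then have "\<phi> (c (k0, \<mu> + e i)) = c (k0, \<mu> + e i)" using \<beta>0 by (simp add: w_def)
      then show ?thesis using cK by (simp add: C_def)
    qed
    have "C i0 \<noteq> 0"
    proof -
      have "c (k0, \<mu> + e i0) = 1" using c_key0 m0\<mu> by simp
      then show ?thesis using char0[of "Poly_Mapping.lookup \<mu> i0 + 1"] by (simp add: C_def)
    qed
    then have "\<exists>i\<le>N. C i \<noteq> 0" using i0N by blast
    moreover have "- c (k0,\<mu>) \<in> K" using cK by simp
    ultimately show ?thesis using Cfix eq by blast
  qed
qed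

end


lemma coef_lift: "coef (map (\<lambda>(m',c'). ((k,m'), s*c')) ys) (k',m) = (if k' = k then s * coef ys m else 0)"
  by (induction ys) (auto simp: algebra_simps)

lemma e_inj[simp]: "e x = e i \<longleftrightarrow> x = i"
  by (metis lookup_single_eq lookup_single_not_eq one_neq_zero)

lemma e_inj'[simp]: "Poly_Mapping.single (x::nat) (Suc 0) = Poly_Mapping.single i (Suc 0) \<longleftrightarrow> x = i"
  by (metis lookup_single_eq lookup_single_not_eq Suc_neq_Zero)

lemma e_nz[simp]: "Poly_Mapping.single (i::nat) (Suc 0) \<noteq> 0"
  by (metis lookup_single_eq lookup_zero Suc_neq_Zero)

lemma good_bound: "\<exists>d. good K (\<lambda>m. mdeg m \<le> d) xs" if "good K (\<lambda>_. True) xs"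
proof -
  have "finite (mdeg ` fst ` set xs)" by simp
  then obtain d where "\<forall>x\<in>mdeg ` fst ` set xs. x \<le> d" using finite_nat_set_iff_bounded_le by blast
  then have "good K (\<lambda>m. mdeg m \<le> d) xs" using that unfolding good_def by fastforce
  then show ?thesis by blast
qed

context pds begin

lemma hyper_of_list:
  assumes "good K Q xs" "lcv (mev (\<lambda>i. (\<delta>^^i) v)) xs = 0" "coef xs m \<noteq> 0"
  shows "hyperalgebraic K \<delta> v"
proof -
  define P :: "'r dpoly" where "P = Abs_poly_mapping (coef xs)"
  have lk: "Poly_Mapping.lookup P = coef xs" unfolding P_def using finite_coef_nz[of xs]
    by (simp add: lookup_Abs_poly_mapping)
  have ks: "Poly_Mapping.keys P = {m. coef xs m \<noteq> 0}" by (auto simp: in_keys_iff lk)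
  have "P \<noteq> 0"
  proof
    assume "P = 0"
    then have "coef xs m = 0" using lk by (metis lookup_zero)
    then show False using assms(3) by simp
  qed
  moreover have "\<forall>m. Poly_Mapping.lookup P m \<in> K" using lk coef_K[OF assms(1)] by simp
  moreover have "dpoly_eval \<delta> P v = 0"
    using assms(2) unfolding dpoly_eval_def ks lk lcv_coef_S[of _ xs] mev_def by simp
  ultimately show ?thesis unfolding hyperalgebraic_def by blast
qed

lemma list_of_hyper:
  assumes "hyperalgebraic K \<delta> v"
  shows "\<exists>xs. good K (\<lambda>_. True) xs \<and> lcv (mev (\<lambda>i. (\<delta>^^i) v)) xs = 0 \<and> (\<exists>m. coef xs m \<noteq> 0)"
proof -
  obtain P :: "'r dpoly" where P: "P \<noteq> 0" "\<forall>m. Poly_Mapping.lookup P m \<in> K" "dpoly_eval \<delta> P v = 0"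
    using assms unfolding hyperalgebraic_def by blast
  obtain ks where ks: "distinct ks" "set ks = Poly_Mapping.keys P"
    using finite_distinct_list[of "Poly_Mapping.keys P"] by auto
  define xs where "xs = map (\<lambda>m. (m, Poly_Mapping.lookup P m)) ks"
  have g: "good K (\<lambda>_. True) xs" using P(2) by (auto simp: xs_def good_def)
  have l: "lcv (mev (\<lambda>i. (\<delta>^^i) v)) xs = 0"
    using P(3) unfolding xs_def lcv_keys_list[OF ks(1)] ks(2) dpoly_eval_def mev_def .
  obtain m where "m \<in> Poly_Mapping.keys P" using P(1) by (metis keys_eq_empty ex_in_conv)
  then have "coef xs m \<noteq> 0" unfolding xs_def coef_keys_list[OF ks(1)] ks(2) by (simp add: in_keys_iff)
  then show ?thesis using g l by blast
qed

end


context pds begin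

lemma part1:
  assumes b: "b \<in> K" and hv: "\<phi> v - v = b" and hy: "hyperalgebraic K \<delta> v"
  shows "linear_telescoper (const_field K \<phi>) K \<phi> \<delta> b"
proof -
  have phv: "\<phi> v = v + b" using hv by (simp add: algebra_simps)
  interpret pc: pcore K \<phi> \<delta> "\<lambda>i. (\<delta>^^i) v" "\<lambda>i. (\<delta>^^i) b" 1 1 1 1 "{0}"
    by unfold_locales (auto simp: setting b phi_di phv)
  obtain xs where xs: "good K (\<lambda>_. True) xs" "lcv (mev (\<lambda>i. (\<delta>^^i) v)) xs = 0" and nz: "\<exists>m. coef xs m \<noteq> 0"
    using list_of_hyper[OF hy] by blast
  obtain d0 where d0: "good K (\<lambda>m. mdeg m \<le> d0) xs" using good_bound[OF xs(1)] by blast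
  define xs0 where "xs0 = map (\<lambda>(m,c). ((0::nat,m), 1*c)) xs"
  have "pc.Rel d0 xs0"
    unfolding pc.Rel_def
  proof (intro conjI)
    show "good K (\<lambda>(k, m). k \<in> {0} \<and> mdeg m \<le> d0) xs0" using d0 by (auto simp: good_def xs0_def)
    show "lcv pc.valM xs0 = 0" unfolding xs0_def pc.lcv_lift using xs(2) by simp
    obtain m where "coef xs m \<noteq> 0" using nz by blast
    then have "coef xs0 (0,m) \<noteq> 0" unfolding xs0_def coef_lift by simp
    then show "\<exists>key. coef xs0 key \<noteq> 0" by blast
  qed
  from pc.core[OF this] show ?thesis
    unfolding linear_telescoper_def const_field_def by auto
qed

lemma part1_conv:
  assumes fixc: "{x. \<phi> x = x} = const_field K \<phi>" and hv: "\<phi> v - v = b"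
    and tel: "linear_telescoper (const_field K \<phi>) K \<phi> \<delta> b"
  shows "hyperalgebraic K \<delta> v"
proof -
  obtain n c f where c: "\<forall>i\<le>n. c i \<in> const_field K \<phi>" and cnz: "\<exists>i\<le>n. c i \<noteq> 0" and fK: "f \<in> K"
    and eq: "(\<Sum>i\<le>n. c i * (\<delta>^^i) b) = \<phi> f - f"
    using tel unfolding linear_telescoper_def by blast
  have cK: "c i \<in> K" "\<phi> (c i) = c i" if "i \<le> n" for i using c that by (auto simp: const_field_def)
  have phv: "\<phi> v = v + b" using hv by (simp add: algebra_simps)
  define h where "h = (\<Sum>i\<le>n. c i * (\<delta>^^i) v) - f"
  have "\<phi> h = (\<Sum>i\<le>n. c i * ((\<delta>^^i) v + (\<delta>^^i) b)) - \<phi> f"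
    unfolding h_def by (simp add: phi_sum phi_di phv cK)
  also have "\<dots> = h" unfolding h_def using eq by (simp add: algebra_simps sum.distrib)
  finally have "h \<in> const_field K \<phi>" using fixc by blast
  then have hK: "h \<in> K" by (simp add: const_field_def)
  define xs where "xs = map (\<lambda>i. (e i, c i)) [0..<Suc n] @ [(0, - (f + h))]"
  have g: "good K (\<lambda>_. True) xs" using cK fK hK by (auto simp: xs_def good_def)
  have su: "set [0..<Suc n] = {..n}" by auto
  have "lcv (mev (\<lambda>i. (\<delta>^^i) v)) xs = (\<Sum>i\<le>n. c i * (\<delta>^^i) v) - (f + h)"
    unfolding xs_def lcv_append lcv_map_list[OF distinct_upt] su by simp
  also have "\<dots> = 0" by (simp add: h_def)
  finally have l: "lcv (mev (\<lambda>i. (\<delta>^^i) v)) xs = 0" .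
  obtain i where i: "i \<le> n" "c i \<noteq> 0" using cnz by blast
  have "coef xs (e i) = c i"
    unfolding xs_def coef_append coef_map_list[OF distinct_upt]
  proof -
    have "(\<Sum>j\<in>set [0..<Suc n]. if e j = e i then c j else 0) = (\<Sum>j\<in>set [0..<Suc n]. if j = i then c j else 0)"
      by (rule sum.cong) auto
    also have "\<dots> = c i" using i by simp
    finally show "(\<Sum>j\<in>set [0..<Suc n]. if e j = e i then c j else 0) + coef [(0, - (f + h))] (e i) = c i"
      by simp
  qed
  then show ?thesis using hyper_of_list[OF g l, of "e i"] i by simp
qed

end


lemma less_pm: "(f::mon) < g \<longleftrightarrow> less_fun (Poly_Mapping.lookup f) (Poly_Mapping.lookup g)"
  by (simp add: less_poly_mapping.rep_eq)

lemma e_less: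
  assumes "m \<noteq> 0" "Poly_Mapping.keys m \<subseteq> {..<j}"
  shows "e j < m"
proof -
  have ne: "Poly_Mapping.keys m \<noteq> {}" using assms(1) by simp
  define k1 where "k1 = Min (Poly_Mapping.keys m)"
  have k1: "k1 \<in> Poly_Mapping.keys m" unfolding k1_def using ne by simp
  have k1j: "k1 < j" using k1 assms(2) by auto
  have below: "Poly_Mapping.lookup m k' = 0" if "k' < k1" for k'
  proof (rule ccontr)
    assume "Poly_Mapping.lookup m k' \<noteq> 0"
    then have "k' \<in> Poly_Mapping.keys m" by (simp add: in_keys_iff)
    then have "k1 \<le> k'" unfolding k1_def by simp
    then show False using that by simp
  qed
  show ?thesis unfolding less_pm less_fun_def
  proof (intro exI[of _ k1] conjI allI impI)
    show "Poly_Mapping.lookup (e j) k1 < Poly_Mapping.lookup m k1"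
      using k1 k1j by (simp add: lookup_single in_keys_iff)
    fix k' assume "k' < k1"
    then show "Poly_Mapping.lookup (e j) k' = Poly_Mapping.lookup m k'"
      using below k1j by (simp add: lookup_single when_def)
  qed
qed

lemma add_e_nz: "(m::mon) + e i \<noteq> 0"
proof
  assume "m + e i = 0"
  then have "Poly_Mapping.lookup (m + e i) i = 0" by simp
  then show False by (simp add: lookup_add)
qed

definition shm :: "mon \<Rightarrow> mon" where "shm m = Abs_poly_mapping (\<lambda>j. Poly_Mapping.lookup m (Suc j))"

lemma lookup_shm[simp]: "Poly_Mapping.lookup (shm m) j = Poly_Mapping.lookup m (Suc j)"
proof -
  have "finite {j. Poly_Mapping.lookup m (Suc j) \<noteq> 0}"
    using finite_vimageI[OF finite_keys[of m], of Suc] by (simp add: in_keys_iff vimage_def)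
  then show ?thesis unfolding shm_def by simp
qed

lemma shm_add: "shm (m + n) = shm m + shm n"
  by (rule poly_mapping_eqI) (simp add: lookup_add)
lemma shm_0[simp]: "shm 0 = 0" by (rule poly_mapping_eqI) simp
lemma shm_e0: "shm (e 0) = 0" by (rule poly_mapping_eqI) (simp add: lookup_single)
lemma shm_eSuc: "shm (e (Suc i)) = e i" by (rule poly_mapping_eqI) (simp add: lookup_single when_def)

lemma mdeg_shm: "mdeg m = Poly_Mapping.lookup m 0 + mdeg (shm m)"
proof -
  obtain N where N: "Poly_Mapping.keys m \<subseteq> {..Suc N}"
    using finite_nat_set_iff_bounded_le[of "Poly_Mapping.keys m"] by (metis finite_keys atMost_iff le_SucI subsetI)
  have ks: "Poly_Mapping.keys (shm m) \<subseteq> {..N}"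
  proof
    fix j assume "j \<in> Poly_Mapping.keys (shm m)"
    then have "Suc j \<in> Poly_Mapping.keys m" by (simp add: in_keys_iff)
    then show "j \<in> {..N}" using N by auto
  qed
  have "mdeg m = (\<Sum>i\<le>Suc N. Poly_Mapping.lookup m i)" using N by (rule mdeg_superset[rotated]) simp
  also have "\<dots> = Poly_Mapping.lookup m 0 + (\<Sum>i\<le>N. Poly_Mapping.lookup m (Suc i))"
    by (rule sum.atMost_Suc_shift)
  also have "(\<Sum>i\<le>N. Poly_Mapping.lookup m (Suc i)) = mdeg (shm m)"
    using mdeg_superset[of "{..N}" "shm m"] ks by simp
  finally show ?thesis .
qed

lemma shm_inj: "mdeg m = mdeg n \<Longrightarrow> shm m = shm n \<Longrightarrow> m = n"
proof (rule poly_mapping_eqI)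
  fix k assume d: "mdeg m = mdeg n" and s: "shm m = shm n"
  show "Poly_Mapping.lookup m k = Poly_Mapping.lookup n k"
  proof (cases k)
    case 0
    then show ?thesis using d s mdeg_shm[of m] mdeg_shm[of n] by simp
  next
    case (Suc j)
    then show ?thesis using arg_cong[OF s, of "\<lambda>p. Poly_Mapping.lookup p j"] by simp
  qed
qed

context pds begin

lemma gs_prod:
  assumes "x \<in> gs K (mev z) Q1" "y \<in> gs K (mev z) Q2" "\<And>m1 m2. Q1 m1 \<Longrightarrow> Q2 m2 \<Longrightarrow> Q3 (m1 + m2)"
  shows "x * y \<in> gs K (mev z) Q3"
proof -
  obtain xs where xs: "good K Q1 xs" "x = lcv (mev z) xs" using assms(1) by (auto simp: gs_def)
  obtain ys where ys: "good K Q2 ys" "y = lcv (mev z) ys" using assms(2) by (auto simp: gs_def)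
  define ps where "ps = concat (map (\<lambda>(m1,c1). map (\<lambda>(m2,c2). (m1 + m2, c1 * c2)) ys) xs)"
  have inner: "lcv (mev z) (map (\<lambda>(m2,c2). (m1 + m2, c1 * c2)) ys) = c1 * mev z m1 * lcv (mev z) ys" for m1 c1
    by (induction ys) (auto simp: mono_add algebra_simps)
  have "lcv (mev z) ps = lcv (mev z) xs * lcv (mev z) ys"
    unfolding ps_def by (induction xs) (auto simp: inner algebra_simps)
  moreover have "good K Q3 ps" using xs(1) ys(1) assms(3) unfolding ps_def good_def by fastforce
  ultimately show ?thesis using xs ys unfolding gs_def by (metis (mono_tags, lifting) mem_Collect_eq)
qed

lemma d_mev_n:
  assumes xS: "\<And>l. x (Suc l) = \<delta> (x l)"
  shows "mdeg m = n \<Longrightarrow> Poly_Mapping.keys m \<subseteq> {..<j} \<Longrightarrow>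
    \<delta> (mev x m) \<in> gs K (mev x) (\<lambda>m'. m' \<noteq> 0 \<and> Poly_Mapping.keys m' \<subseteq> {..<Suc j})"
proof (induction n arbitrary: m)
  case 0
  then have "m = 0" by (simp add: mdeg_eq0)
  then show ?case by simp
next
  case (Suc n)
  then have "m \<noteq> 0" by auto
  then obtain l where l: "l \<in> Poly_Mapping.keys m" by (metis keys_eq_empty ex_in_conv)
  define m' where "m' = m - e l"
  have mm: "m = m' + e l" using sub_e_add[OF l] m'_def by simp
  have km': "Poly_Mapping.keys m' \<subseteq> Poly_Mapping.keys m" using mm by (auto simp: in_keys_iff lookup_add)
  have lj: "l < j" using l Suc.prems(2) by auto
  have dm': "mdeg m' = n" using mm Suc.prems(1) by simp
  have "\<delta> (mev x m) = mev x m' * x (Suc l) + \<delta> (mev x m') * x l"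
    using mm by (simp add: mono_add d_mult xS)
  moreover have "mev x m' * x (Suc l) \<in> gs K (mev x) (\<lambda>m'. m' \<noteq> 0 \<and> Poly_Mapping.keys m' \<subseteq> {..<Suc j})"
  proof -
    have eqm: "mev x m' * x (Suc l) = 1 * mev x (m' + e (Suc l))" by (simp add: mono_add)
    have nz: "m' + e (Suc l) \<noteq> 0" by (rule add_e_nz)
    have ksub: "Poly_Mapping.keys (m' + e (Suc l)) \<subseteq> {..<Suc j}"
    proof -
      have "Poly_Mapping.keys (m' + e (Suc l)) \<subseteq> insert (Suc l) (Poly_Mapping.keys m)"
        using keys_add_sub[of m' "e (Suc l)"] km' by auto
      moreover have "insert (Suc l) (Poly_Mapping.keys m) \<subseteq> {..<Suc j}" using Suc.prems(2) lj by auto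
      ultimately show ?thesis by (rule order_trans)
    qed
    have "1 * mev x (m' + e (Suc l)) \<in> gs K (mev x) (\<lambda>m'. m' \<noteq> 0 \<and> Poly_Mapping.keys m' \<subseteq> {..<Suc j})"
      by (rule gs_single) (use nz ksub in auto)
    then show ?thesis unfolding eqm .
  qed
  moreover have "\<delta> (mev x m') * x l \<in> gs K (mev x) (\<lambda>m'. m' \<noteq> 0 \<and> Poly_Mapping.keys m' \<subseteq> {..<Suc j})"
  proof (rule gs_mult_z)
    show "\<delta> (mev x m') \<in> gs K (mev x) (\<lambda>m'. m' \<noteq> 0 \<and> Poly_Mapping.keys m' \<subseteq> {..<Suc j})"
      using Suc.IH[OF dm'] km' Suc.prems(2) by blast
    fix m'' :: mon assume "m'' \<noteq> 0 \<and> Poly_Mapping.keys m'' \<subseteq> {..<Suc j}"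
    moreover have "m'' + e l \<noteq> 0" by (rule add_e_nz)
    moreover have "Poly_Mapping.keys ((m''::mon) + e l) \<subseteq> insert l (Poly_Mapping.keys m'')"
      using keys_add_sub[of m'' "e l"] by auto
    ultimately show "m'' + e l \<noteq> 0 \<and> Poly_Mapping.keys (m'' + e l) \<subseteq> {..<Suc j}"
      using lj by auto
  qed
  ultimately show ?case by (simp add: gs_add)
qed

lemma d_gs:
  assumes xS: "\<And>l. x (Suc l) = \<delta> (x l)" and Q: "\<And>m. m \<noteq> 0 \<Longrightarrow> Q m"
    and r: "r \<in> gs K (mev x) (\<lambda>m. Q m \<and> Poly_Mapping.keys m \<subseteq> {..<j})"
  shows "\<delta> r \<in> gs K (mev x) (\<lambda>m. Q m \<and> Poly_Mapping.keys m \<subseteq> {..<Suc j})"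
proof -
  obtain ys where ys: "good K (\<lambda>m. Q m \<and> Poly_Mapping.keys m \<subseteq> {..<j}) ys" "r = lcv (mev x) ys"
    using r by (auto simp: gs_def)
  have "\<delta> (lcv (mev x) ys) \<in> gs K (mev x) (\<lambda>m. Q m \<and> Poly_Mapping.keys m \<subseteq> {..<Suc j})"
    using ys(1)
  proof (induction ys)
    case (Cons p ys)
    obtain m c where p: "p = (m,c)" by force
    have mc: "Q m" "Poly_Mapping.keys m \<subseteq> {..<j}" "c \<in> K" using Cons.prems p by (auto simp: good_def)
    have "\<delta> (lcv (mev x) (p # ys)) = c * \<delta> (mev x m) + \<delta> c * mev x m + \<delta> (lcv (mev x) ys)"
      using p by (simp add: d_mult)
    moreover have "c * \<delta> (mev x m) \<in> gs K (mev x) (\<lambda>m. Q m \<and> Poly_Mapping.keys m \<subseteq> {..<Suc j})"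
      by (rule gs_scale[OF mc(3)], rule gs_mono[OF d_mev_n[where x=x and m=m and n="mdeg m" and j=j, OF xS refl mc(2)]]) (use Q in auto)
    moreover have "\<delta> c * mev x m \<in> gs K (mev x) (\<lambda>m. Q m \<and> Poly_Mapping.keys m \<subseteq> {..<Suc j})"
      by (rule gs_single) (use mc in auto)
    moreover have "\<delta> (lcv (mev x) ys) \<in> gs K (mev x) (\<lambda>m. Q m \<and> Poly_Mapping.keys m \<subseteq> {..<Suc j})"
      using Cons by (auto simp: good_def)
    ultimately show ?case by (simp add: gs_add)
  qed simp
  then show ?thesis using ys by simp
qed

end


locale pii = pds K \<phi> \<delta> for K :: "'r::comm_ring_1 set" and \<phi> \<delta> +
  fixes v w a a_inv :: 'r
  assumes vw: "v * w = 1" and phv: "\<phi> v = a * v" and aK: "a \<in> K" and aiK: "a_inv \<in> K"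
    and aai: "a * a_inv = 1"
begin

definition u where "u = \<delta> v * w"
definition zz where "zz j = (\<delta>^^j) u"
definition yy where "yy i = (\<delta>^^i) v"
definition qq where "qq i = yy i * w"

lemma zzS: "zz (Suc l) = \<delta> (zz l)" by (simp add: zz_def)
lemma yyS: "yy (Suc l) = \<delta> (yy l)" by (simp add: yy_def)

lemma dw: "\<delta> w = - (u * w)"
proof -
  have "0 = \<delta> (v * w)" using vw by simp
  also have "\<dots> = v * \<delta> w + \<delta> v * w" by (rule d_mult)
  finally have "v * \<delta> w = - (\<delta> v * w)" by (simp add: eq_neg_iff_add_eq_0 add.commute)
  then have h: "w * (v * \<delta> w) = - (w * (\<delta> v * w))" by simp
  have l: "w * (v * \<delta> w) = \<delta> w" using vw by (simp add: mult.assoc[symmetric] mult.commute[of w v])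
  have r: "w * (\<delta> v * w) = u * w" by (simp add: u_def ac_simps)
  show ?thesis using h l r by simp
qed

lemma qq_Suc: "qq (Suc i) = \<delta> (qq i) + u * qq i"
  unfolding qq_def using dw by (simp add: d_mult yyS algebra_simps)

lemma qq0: "qq 0 = 1" using vw by (simp add: qq_def yy_def)
lemma qq1: "qq 1 = zz 0" by (simp add: qq_def yy_def zz_def u_def)
lemma yy_qq: "yy i = v * qq i"
proof -
  have "v * qq i = yy i * (v * w)" by (simp add: qq_def ac_simps)
  then show ?thesis using vw by simp
qed

lemma qstruct: "\<exists>r\<in>gs K (mev zz) (\<lambda>m. m \<noteq> 0 \<and> Poly_Mapping.keys m \<subseteq> {..<i}). qq (Suc i) = zz i + r"
proof (induction i)
  case 0
  show ?case using qq1 by (intro bexI[of _ 0]) auto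
next
  case (Suc i)
  then obtain r where r: "r \<in> gs K (mev zz) (\<lambda>m. m \<noteq> 0 \<and> Poly_Mapping.keys m \<subseteq> {..<i})" and q: "qq (Suc i) = zz i + r"
    by blast
  have "qq (Suc (Suc i)) = zz (Suc i) + (\<delta> r + zz 0 * zz i + r * zz 0)"
    unfolding qq_Suc[of "Suc i"] q by (simp add: zzS zz_def algebra_simps)
  moreover have "\<delta> r \<in> gs K (mev zz) (\<lambda>m. m \<noteq> 0 \<and> Poly_Mapping.keys m \<subseteq> {..<Suc i})"
    by (rule d_gs[OF zzS _ r]) simp
  moreover have "zz 0 * zz i \<in> gs K (mev zz) (\<lambda>m. m \<noteq> 0 \<and> Poly_Mapping.keys m \<subseteq> {..<Suc i})"
  proof -
    have "zz 0 * zz i = 1 * mev zz (e i + e 0)" by (simp add: mono_add)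
    moreover have "1 * mev zz (e i + e 0) \<in> gs K (mev zz) (\<lambda>m. m \<noteq> 0 \<and> Poly_Mapping.keys m \<subseteq> {..<Suc i})"
    proof (rule gs_single)
      show "e i + e 0 \<noteq> 0 \<and> Poly_Mapping.keys (e i + e 0) \<subseteq> {..<Suc i}"
        using add_e_nz[of "e i" 0] keys_add_sub[of "e i" "e 0"] by auto
    qed simp
    ultimately show ?thesis by simp
  qed
  moreover have "r * zz 0 \<in> gs K (mev zz) (\<lambda>m. m \<noteq> 0 \<and> Poly_Mapping.keys m \<subseteq> {..<Suc i})"
  proof (rule gs_mult_z[OF r])
    fix m :: mon assume "m \<noteq> 0 \<and> Poly_Mapping.keys m \<subseteq> {..<i}"
    moreover have "Poly_Mapping.keys (m + e 0) \<subseteq> insert 0 (Poly_Mapping.keys m)"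
      using keys_add_sub[of m "e 0"] by auto
    ultimately show "m + e 0 \<noteq> 0 \<and> Poly_Mapping.keys (m + e 0) \<subseteq> {..<Suc i}"
      using add_e_nz[of m 0] by auto
  qed
  ultimately show ?case by (blast intro: gs_add)
qed

lemma qq_T: "\<exists>r\<in>gs K (mev zz) (\<lambda>m. shm (e l) < m). qq l = mev zz (shm (e l)) + r"
proof (cases l)
  case 0
  then show ?thesis using qq0 shm_e0 by (intro bexI[of _ 0]) auto
next
  case (Suc i)
  obtain r where r: "r \<in> gs K (mev zz) (\<lambda>m. m \<noteq> 0 \<and> Poly_Mapping.keys m \<subseteq> {..<i})" "qq (Suc i) = zz i + r"
    using qstruct[of i] by blast
  have "r \<in> gs K (mev zz) (\<lambda>m. e i < m)"
    by (rule gs_mono[OF r(1)]) (erule conjE, erule e_less, assumption)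
  then have "r \<in> gs K (mev zz) (\<lambda>m. shm (e l) < m)" using Suc shm_eSuc[of i] by simp
  then show ?thesis using r(2) Suc shm_eSuc[of i] by auto
qed

lemma ystruct_n: "mdeg m = n \<Longrightarrow> \<exists>r\<in>gs K (mev zz) (\<lambda>m'. shm m < m'). mev yy m = v ^ mdeg m * (mev zz (shm m) + r)"
proof (induction n arbitrary: m)
  case 0
  then have "m = 0" by (simp add: mdeg_eq0)
  then show ?case by (intro bexI[of _ 0]) auto
next
  case (Suc n)
  then have "m \<noteq> 0" by auto
  then obtain l where l: "l \<in> Poly_Mapping.keys m" by (metis keys_eq_empty ex_in_conv)
  define m' where "m' = m - e l"
  have mm: "m = m' + e l" using sub_e_add[OF l] m'_def by simp
  have dm': "mdeg m' = n" using mm Suc.prems by simp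
  obtain t1 where t1: "t1 \<in> gs K (mev zz) (\<lambda>m''. shm m' < m'')" "mev yy m' = v ^ mdeg m' * (mev zz (shm m') + t1)"
    using Suc.IH[OF dm'] by blast
  obtain t2 where t2: "t2 \<in> gs K (mev zz) (\<lambda>m''. shm (e l) < m'')" "qq l = mev zz (shm (e l)) + t2"
    using qq_T[of l] by blast
  let ?M1 = "shm m'" and ?M2 = "shm (e l)"
  have shmm: "shm m = ?M1 + ?M2" using mm by (simp add: shm_add)
  have "mev yy m = v ^ mdeg m' * (mev zz ?M1 + t1) * (v * (mev zz ?M2 + t2))"
    using mm t1(2) t2(2) yy_qq[of l] by (simp add: mono_add)
  also have "\<dots> = v ^ mdeg m * (mev zz (shm m) + (mev zz ?M1 * t2 + t1 * mev zz ?M2 + t1 * t2))"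
    using mm shmm by (simp add: mono_add algebra_simps)
  finally have eq: "mev yy m = v ^ mdeg m * (mev zz (shm m) + (mev zz ?M1 * t2 + t1 * mev zz ?M2 + t1 * t2))" .
  have m1: "mev zz ?M1 \<in> gs K (mev zz) (\<lambda>m''. m'' = ?M1)" using gs_single[of "\<lambda>m''. m'' = ?M1" ?M1 1] by simp
  have m2: "mev zz ?M2 \<in> gs K (mev zz) (\<lambda>m''. m'' = ?M2)" using gs_single[of "\<lambda>m''. m'' = ?M2" ?M2 1] by simp
  have A: "mev zz ?M1 * t2 \<in> gs K (mev zz) (\<lambda>m''. shm m < m'')"
    by (rule gs_prod[OF m1 t2(1)]) (simp add: shmm add_strict_left_mono)
  have B: "t1 * mev zz ?M2 \<in> gs K (mev zz) (\<lambda>m''. shm m < m'')"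
    by (rule gs_prod[OF t1(1) m2]) (simp add: shmm add_strict_right_mono)
  have C: "t1 * t2 \<in> gs K (mev zz) (\<lambda>m''. shm m < m'')"
    by (rule gs_prod[OF t1(1) t2(1)]) (simp add: shmm add_strict_mono)
  show ?case using eq A B C by (blast intro: gs_add)
qed

lemma ystruct: "\<exists>ys. good K (\<lambda>m'. shm m < m') ys \<and> mev yy m = v ^ mdeg m * (mev zz (shm m) + lcv (mev zz) ys)"
  using ystruct_n[of m "mdeg m"] by (auto simp: gs_def)

end


lemma good_bound2: "\<exists>d. good K (\<lambda>(k,m). k \<in> A \<and> mdeg m \<le> d) xs" if "good K (\<lambda>(k,m). k \<in> A) xs"
proof -
  have "finite ((\<lambda>p. mdeg (snd (fst p))) ` set xs)" by simp
  then obtain d where "\<forall>x\<in>(\<lambda>p. mdeg (snd (fst p))) ` set xs. x \<le> d" using finite_nat_set_iff_bounded_le by blast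
  then have "good K (\<lambda>(k,m). k \<in> A \<and> mdeg m \<le> d) xs" using that unfolding good_def by fastforce
  then show ?thesis by blast
qed

context pii begin

definition g where "g = \<delta> a * a_inv"

lemma gK: "g \<in> K" using aK aiK by (simp add: g_def)

lemma phi_w: "\<phi> w = a_inv * w"
proof -
  have "\<phi> v * \<phi> w = 1" using vw by (metis phi_1 phi_mult)
  then have "a * v * \<phi> w = 1" using phv by simp
  then have "(a_inv * w) * (a * v * \<phi> w) = a_inv * w" by simp
  moreover have "(a_inv * w) * (a * v * \<phi> w) = (a * a_inv) * (v * w) * \<phi> w" by (simp add: ac_simps)
  ultimately show ?thesis using aai vw by simp
qed

lemma phi_u: "\<phi> u = u + g"
proof -
  have "\<phi> u = \<delta> (a * v) * (a_inv * w)" by (simp add: u_def phi_d phv phi_w)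
  also have "\<dots> = (a * a_inv) * (\<delta> v * w) + (\<delta> a * a_inv) * (v * w)" by (simp add: d_mult algebra_simps)
  finally show ?thesis using aai vw by (simp add: u_def g_def)
qed

lemma part2:
  assumes hy: "hyperalgebraic K \<delta> v"
  shows "linear_telescoper (const_field K \<phi>) K \<phi> \<delta> g"
proof -
  interpret pc: pcore K \<phi> \<delta> zz "\<lambda>j. (\<delta>^^j) g" v w a a_inv UNIV
    by unfold_locales (auto simp: setting gK zz_def phi_di phi_u vw phv aK aiK aai)
  have yyeq: "(\<lambda>i. (\<delta>^^i) v) = yy" by (simp add: yy_def fun_eq_iff)
  obtain ys0 where ys0: "good K (\<lambda>_. True) ys0" "lcv (mev yy) ys0 = 0" and nz: "\<exists>m. coef ys0 m \<noteq> 0"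
    using list_of_hyper[OF hy] unfolding yyeq by blast
  define Sy where "Sy = {m. coef ys0 m \<noteq> 0}"
  have finSy: "finite Sy" unfolding Sy_def by (rule finite_coef_nz)
  obtain sl where sl: "distinct sl" "set sl = Sy" using finite_distinct_list[OF finSy] by blast
  have "\<forall>m. \<exists>ys. good K (\<lambda>m'. shm m < m') ys \<and> mev yy m = v ^ mdeg m * (mev zz (shm m) + lcv (mev zz) ys)"
    using ystruct by blast
  then obtain Rt where Rt: "\<And>m. good K (\<lambda>m'. shm m < m') (Rt m)"
    "\<And>m. mev yy m = v ^ mdeg m * (mev zz (shm m) + lcv (mev zz) (Rt m))" by metis
  define tl where "tl m = map (\<lambda>(m',c'). ((mdeg m, m'), coef ys0 m * c')) (Rt m)" for m
  define mixed where "mixed = concat (map (\<lambda>m. ((mdeg m, shm m), coef ys0 m) # tl m) sl)"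
  have cK: "coef ys0 m \<in> K" for m by (rule coef_K[OF ys0(1)])
  have gm: "good K (\<lambda>(k,m). k \<in> UNIV) mixed"
    unfolding good_def mixed_def tl_def using Rt(1) cK by (fastforce simp: good_def)
  obtain d0 where gd: "good K (\<lambda>(k,m). k \<in> UNIV \<and> mdeg m \<le> d0) mixed" using good_bound2[OF gm] by blast
  have lm: "lcv pc.valM mixed = 0"
  proof -
    have "lcv pc.valM mixed = (\<Sum>m\<in>Sy. coef ys0 m * mev yy m)"
      unfolding mixed_def lcv_concat_set[OF sl(1)] sl(2)
      by (rule sum.cong[OF refl], simp only: tl_def pc.lcv_lift lcv_Cons Rt(2) pc.valM_def fst_conv snd_conv)
        (simp add: algebra_simps)
    also have "\<dots> = lcv (mev yy) ys0" by (simp add: lcv_coef_S Sy_def)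
    finally show ?thesis using ys0(2) by simp
  qed
  obtain m1 where m1: "m1 \<in> Sy" using nz by (auto simp: Sy_def)
  define k' where "k' = mdeg m1"
  define Sk where "Sk = {m\<in>Sy. mdeg m = k'}"
  have finSk: "finite (shm ` Sk)" using finSy by (simp add: Sk_def)
  have neSk: "shm ` Sk \<noteq> {}" using m1 by (auto simp: Sk_def k'_def)
  define M' where "M' = Min (shm ` Sk)"
  obtain ms where ms: "ms \<in> Sk" "shm ms = M'" using Min_in[OF finSk neSk] unfolding M'_def by auto
  have Mmin: "M' \<le> shm m" if "m \<in> Sk" for m using that finSk unfolding M'_def by simp
  have "coef mixed (k', M') = (\<Sum>m\<in>Sy. (if m = ms then coef ys0 m else 0))"
    unfolding mixed_def coef_concat_set[OF sl(1)] sl(2)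
  proof (rule sum.cong[OF refl])
    fix m assume mS: "m \<in> Sy"
    have t0: "coef (tl m) (k', M') = 0"
    proof (cases "mdeg m = k'")
      case True
      then have "M' \<le> shm m" using Mmin mS by (simp add: Sk_def)
      then have "coef (Rt m) M' = 0"
        using Rt(1)[of m] by (intro coef_notin) (auto simp: good_def)
      then show ?thesis by (simp add: tl_def coef_lift)
    next
      case False
      then show ?thesis by (simp add: tl_def coef_lift)
    qed
    have "(mdeg m, shm m) = (k', M') \<longleftrightarrow> m = ms"
      using ms shm_inj[of m ms] by (auto simp: Sk_def)
    then show "coef (((mdeg m, shm m), coef ys0 m) # tl m) (k', M') = (if m = ms then coef ys0 m else 0)"
      using t0 by simp
  qed
  also have "\<dots> = coef ys0 ms" using ms(1) finSy by (simp add: Sk_def)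
  finally have "coef mixed (k', M') \<noteq> 0" using ms(1) by (simp add: Sk_def Sy_def)
  then have "pc.Rel d0 mixed" unfolding pc.Rel_def using gd lm by blast
  from pc.core[OF this] show ?thesis
  proof
    assume "\<exists>N c f. (\<forall>i\<le>N. c i \<in> K \<and> \<phi> (c i) = c i) \<and> (\<exists>i\<le>N. c i \<noteq> 0) \<and> f \<in> K \<and> (\<Sum>i\<le>N. c i * (\<delta>^^i) g) = \<phi> f - f"
    then show ?thesis unfolding linear_telescoper_def const_field_def by auto
  next
    assume "\<exists>k0 k1 ee. k0 \<in> UNIV \<and> k1 \<in> UNIV \<and> k0 \<noteq> k1 \<and> ee \<in> K \<and> ee \<noteq> 0 \<and> a^k1 * \<phi> ee = a^k0 * ee"
    then obtain k0 k1 ee where k: "k0 \<noteq> k1" and eeK: "ee \<in> K" "ee \<noteq> 0" and eq: "a^k1 * \<phi> ee = a^k0 * ee" by blast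
    obtain ei where eiK: "ei \<in> K" and ei: "ee * ei = 1" using Kinv[OF eeK] by blast
    define h where "h = \<delta> ee * ei"
    have hK: "h \<in> K" using eeK eiK by (simp add: h_def)
    have dee: "\<delta> ee = h * ee"
    proof -
      have "h * ee = \<delta> ee * (ee * ei)" by (simp add: h_def ac_simps)
      then show ?thesis using ei by simp
    qed
    have dpow: "\<delta> (a ^ k) = of_nat k * g * a ^ k" for k using d_pow[OF aai] by (simp add: g_def)
    have dphee: "\<delta> (\<phi> ee) = \<phi> h * \<phi> ee" using dee by (simp add: phi_d[symmetric])
    have L: "\<delta> (a^k0 * ee) = (of_nat k0 * g + h) * (a^k0 * ee)"
      by (simp add: d_mult dpow dee algebra_simps)
    have R: "\<delta> (a^k1 * \<phi> ee) = (of_nat k1 * g + \<phi> h) * (a^k0 * ee)"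
      unfolding eq[symmetric] by (simp add: d_mult dpow dphee algebra_simps)
    have inv: "(a^k0 * ee) * (a_inv^k0 * ei) = 1"
    proof -
      have "(a^k0 * ee) * (a_inv^k0 * ei) = (a * a_inv)^k0 * (ee * ei)" by (simp add: power_mult_distrib ac_simps)
      then show ?thesis using aai ei by simp
    qed
    have "(of_nat k0 * g + h) * (a^k0 * ee) = (of_nat k1 * g + \<phi> h) * (a^k0 * ee)"
      using L R eq by simp
    then have "(of_nat k0 * g + h) * ((a^k0 * ee) * (a_inv^k0 * ei)) = (of_nat k1 * g + \<phi> h) * ((a^k0 * ee) * (a_inv^k0 * ei))"
      by (simp add: mult.assoc[symmetric])
    then have "of_nat k0 * g + h = of_nat k1 * g + \<phi> h" using inv by simp
    then have teq: "of_int (int k1 - int k0) * g = \<phi> (- h) - (- h)" by (simp add: algebra_simps)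
    have cnz: "(of_int (int k1 - int k0) :: 'r) \<noteq> 0" using k by (intro char0_int) simp
    show ?thesis unfolding linear_telescoper_def const_field_def
    proof (rule exI[of _ 0], rule exI[of _ "\<lambda>_. of_int (int k1 - int k0)"], intro conjI)
      show "\<exists>f\<in>K. (\<Sum>i\<le>0. of_int (int k1 - int k0) * (\<delta> ^^ i) g) = \<phi> f - f"
        using teq hK by (intro bexI[of _ "- h"]) auto
    qed (use cnz in auto)
  qed
qed

end


context pii begin

definition EE where "EE i = v ^ Suc i * zz i"
definition PP where "PP i = v ^ i * yy (Suc i)"

lemma yy0: "yy 0 = v" by (simp add: yy_def)
lemma vu: "v * u = yy 1"
proof -
  have "v * u = \<delta> v * (v * w)" by (simp add: u_def ac_simps)
  then show ?thesis using vw by (simp add: yy_def)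
qed

lemma EE_rec: "EE (Suc i) = v * \<delta> (EE i) - of_nat (Suc i) * yy 1 * EE i"
proof -
  have dv: "\<delta> (v ^ Suc i) = of_nat (Suc i) * u * v ^ Suc i" unfolding u_def by (rule d_pow[OF vw])
  have "\<delta> (EE i) = of_nat (Suc i) * u * v ^ Suc i * zz i + v ^ Suc i * zz (Suc i)"
    unfolding EE_def by (simp only: d_mult dv zzS[symmetric]) (simp add: algebra_simps)
  then have "v * \<delta> (EE i) = of_nat (Suc i) * (v * u) * EE i + EE (Suc i)"
    by (simp add: EE_def algebra_simps)
  then show ?thesis using vu by simp
qed

lemma PP_rec: "v * \<delta> (PP i) = of_nat i * yy 1 * PP i + PP (Suc i)"
proof -
  have dv: "\<delta> (v ^ i) = of_nat i * u * v ^ i" unfolding u_def by (rule d_pow[OF vw])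
  have "v * \<delta> (PP i) = of_nat i * (v * u) * PP i + PP (Suc i)"
    unfolding PP_def by (simp only: d_mult dv yyS[symmetric]) (simp add: algebra_simps)
  then show ?thesis using vu by simp
qed

lemma PP_mev: "PP i = mev yy (Poly_Mapping.single 0 i + e (Suc i))"
  by (simp add: PP_def mono_add yy0)

lemma EE_struct: "\<exists>U\<in>gs K (mev yy) (\<lambda>m. Poly_Mapping.keys m \<subseteq> {..<Suc i}). EE i = PP i + U"
proof (induction i)
  case 0
  have "EE 0 = PP 0" using vu by (simp add: EE_def PP_def zz_def)
  then show ?case by (intro bexI[of _ 0]) auto
next
  case (Suc i)
  then obtain U where U: "U \<in> gs K (mev yy) (\<lambda>m. Poly_Mapping.keys m \<subseteq> {..<Suc i})" and E: "EE i = PP i + U" by blast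
  have "EE (Suc i) = v * \<delta> (PP i) + v * \<delta> U - of_nat (Suc i) * yy 1 * (PP i + U)"
    unfolding EE_rec E by (simp add: algebra_simps)
  also have "\<dots> = PP (Suc i) + ((- 1) * mev yy (Poly_Mapping.single 0 i + e (Suc i) + e 1) + v * \<delta> U + (- of_nat (Suc i)) * (U * yy 1))"
    unfolding PP_rec by (simp add: PP_mev mono_add algebra_simps)
  finally have eq: "EE (Suc i) = PP (Suc i) + ((- 1) * mev yy (Poly_Mapping.single 0 i + e (Suc i) + e 1) + v * \<delta> U + (- of_nat (Suc i)) * (U * yy 1))" .
  let ?Q = "\<lambda>m. Poly_Mapping.keys m \<subseteq> {..<Suc (Suc i)}"
  have A: "(- 1) * mev yy (Poly_Mapping.single 0 i + e (Suc i) + e 1) \<in> gs K (mev yy) ?Q"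
  proof (rule gs_single)
    have k1: "Poly_Mapping.keys (Poly_Mapping.single 0 i + e (Suc i)) \<subseteq> {0, Suc i}"
      by (rule order_trans[OF keys_add_sub]) auto
    have "Poly_Mapping.keys (Poly_Mapping.single 0 i + e (Suc i) + e 1) \<subseteq> {0, Suc i, 1}"
      by (rule order_trans[OF keys_add_sub]) (use k1 in auto)
    then show "?Q (Poly_Mapping.single 0 i + e (Suc i) + e 1)" by auto
  qed simp
  have dU: "\<delta> U \<in> gs K (mev yy) ?Q"
    using d_gs[where x=yy and Q="\<lambda>_. True" and r=U and j="Suc i", OF yyS] U by simp
  have B: "v * \<delta> U \<in> gs K (mev yy) ?Q"
  proof -
    have "\<delta> U * yy 0 \<in> gs K (mev yy) ?Q"
    proof (rule gs_mult_z[OF dU])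
      fix m :: mon assume "?Q m"
      then show "?Q (m + e 0)" using keys_add_sub[of m "e 0"] by auto
    qed
    then show ?thesis by (simp add: yy0 mult.commute)
  qed
  have C: "(- of_nat (Suc i)) * (U * yy 1) \<in> gs K (mev yy) ?Q"
  proof (rule gs_scale)
    show "- of_nat (Suc i) \<in> K" by simp
    show "U * yy 1 \<in> gs K (mev yy) ?Q"
    proof (rule gs_mult_z[OF U])
      fix m :: mon assume "Poly_Mapping.keys m \<subseteq> {..<Suc i}"
      then show "?Q (m + e 1)" using keys_add_sub[of m "e 1"] by auto
    qed
  qed
  show ?case using eq A B C by (blast intro: gs_add)
qed

lemma vpow_gs: "x \<in> gs K (mev yy) (\<lambda>m. Poly_Mapping.keys m \<subseteq> {..<Suc j}) \<Longrightarrow>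
    v ^ k * x \<in> gs K (mev yy) (\<lambda>m. Poly_Mapping.keys m \<subseteq> {..<Suc j})"
proof (induction k)
  case (Suc k)
  have "v ^ k * x * yy 0 \<in> gs K (mev yy) (\<lambda>m. Poly_Mapping.keys m \<subseteq> {..<Suc j})"
  proof (rule gs_mult_z[OF Suc.IH[OF Suc.prems]])
    fix m :: mon assume "Poly_Mapping.keys m \<subseteq> {..<Suc j}"
    then show "Poly_Mapping.keys (m + e 0) \<subseteq> {..<Suc j}" using keys_add_sub[of m "e 0"] by auto
  qed
  then show ?case by (simp add: yy0 ac_simps)
qed simp


lemma part2_conv:
  assumes fixc: "{x. \<phi> x = x} = const_field K \<phi>"
    and tel: "linear_telescoper (const_field K \<phi>) K \<phi> \<delta> g"
  shows "hyperalgebraic K \<delta> v"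
proof -
  obtain n c f where c: "\<forall>i\<le>n. c i \<in> const_field K \<phi>" and cnz: "\<exists>i\<le>n. c i \<noteq> 0" and fK: "f \<in> K"
    and eq: "(\<Sum>i\<le>n. c i * (\<delta>^^i) g) = \<phi> f - f"
    using tel unfolding linear_telescoper_def by blast
  have cK: "c i \<in> K" "\<phi> (c i) = c i" if "i \<le> n" for i using c that by (auto simp: const_field_def)
  have phz: "\<phi> (zz i) = zz i + (\<delta>^^i) g" for i by (simp add: zz_def phi_di phi_u)
  define H where "H = (\<Sum>i\<le>n. c i * zz i) - f"
  have "\<phi> H = (\<Sum>i\<le>n. c i * (zz i + (\<delta>^^i) g)) - \<phi> f"
    unfolding H_def by (simp add: phi_sum phz cK)
  also have "\<dots> = H" unfolding H_def using eq by (simp add: algebra_simps sum.distrib)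
  finally have "H \<in> const_field K \<phi>" using fixc by blast
  then have HK: "H \<in> K" by (simp add: const_field_def)
  define G where "G = f + H"
  have GK: "G \<in> K" using fK HK by (simp add: G_def)
  have sumG: "(\<Sum>i\<le>n. c i * zz i) = G" by (simp add: G_def H_def)
  define I where "I = {i. i \<le> n \<and> c i \<noteq> 0}"
  have finI: "finite I" "I \<noteq> {}" using cnz by (auto simp: I_def)
  define n' where "n' = Max I"
  have n'I: "n' \<in> I" using finI unfolding n'_def by simp
  have n'n: "n' \<le> n" and cn': "c n' \<noteq> 0" using n'I by (auto simp: I_def)
  have above: "c i = 0" if "n' < i" "i \<le> n" for i
  proof (rule ccontr)
    assume "c i \<noteq> 0"
    then have "i \<in> I" using that by (simp add: I_def)
    then have "i \<le> n'" using finI unfolding n'_def by simp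
    then show False using that by simp
  qed
  have sum': "(\<Sum>i\<le>n'. c i * zz i) = G"
  proof -
    have "(\<Sum>i\<le>n. c i * zz i) = (\<Sum>i\<le>n'. c i * zz i)"
      by (rule sum.mono_neutral_right) (use n'n above in auto)
    then show ?thesis using sumG by simp
  qed
  have cK': "c i \<in> K" if "i \<le> n'" for i using cK n'n that by simp
  \<comment> \<open>multiply through by v^(n'+1)\<close>
  have vE: "v ^ (n' - i) * EE i = v ^ Suc n' * zz i" if "i \<le> n'" for i
  proof -
    have "v ^ (n' - i) * EE i = v ^ (n' - i + Suc i) * zz i" by (simp add: EE_def power_add ac_simps)
    also have "n' - i + Suc i = Suc n'" using that by simp
    finally show ?thesis .
  qed
  have rel: "(\<Sum>i\<le>n'. c i * (v ^ (n' - i) * EE i)) = G * v ^ Suc n'"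
  proof -
    have "(\<Sum>i\<le>n'. c i * (v ^ (n' - i) * EE i)) = (\<Sum>i\<le>n'. v ^ Suc n' * (c i * zz i))"
      by (rule sum.cong[OF refl]) (simp add: vE)
    also have "\<dots> = v ^ Suc n' * G" by (simp add: sum_distrib_left[symmetric] sum')
    finally show ?thesis by (simp add: mult.commute)
  qed
  let ?Q = "\<lambda>m. Poly_Mapping.keys m \<subseteq> {..<Suc n'}"
  obtain U where U: "U \<in> gs K (mev yy) (\<lambda>m. Poly_Mapping.keys m \<subseteq> {..<Suc n'})" and En: "EE n' = PP n' + U"
    using EE_struct[of n'] by blast
  have low: "c i * (v ^ (n' - i) * EE i) \<in> gs K (mev yy) ?Q" if "i < n'" for i
  proof -
    obtain Ui where Ui: "Ui \<in> gs K (mev yy) (\<lambda>m. Poly_Mapping.keys m \<subseteq> {..<Suc i})" and Ei: "EE i = PP i + Ui"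
      using EE_struct[of i] by blast
    have "PP i \<in> gs K (mev yy) ?Q"
    proof -
      have "Poly_Mapping.keys (Poly_Mapping.single 0 i + e (Suc i)) \<subseteq> {0, Suc i}"
        by (rule order_trans[OF keys_add_sub]) auto
      then have "1 * mev yy (Poly_Mapping.single 0 i + e (Suc i)) \<in> gs K (mev yy) ?Q"
        using that by (intro gs_single) auto
      then show ?thesis by (simp add: PP_mev)
    qed
    moreover have "Ui \<in> gs K (mev yy) ?Q" using Ui that by (auto elim!: gs_mono)
    ultimately have "EE i \<in> gs K (mev yy) ?Q" using Ei by (simp add: gs_add)
    then show ?thesis using cK'[of i] that by (intro gs_scale vpow_gs) auto
  qed
  define X where "X = c n' * U + (\<Sum>i<n'. c i * (v ^ (n' - i) * EE i))"
  have X: "X \<in> gs K (mev yy) ?Q" unfolding X_def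
    by (intro gs_add gs_scale[OF cK'[OF order_refl] U] gs_sum low) auto
  obtain LX where LX: "good K ?Q LX" "lcv (mev yy) LX = X" using X by (auto simp: gs_def)
  define M where "M = Poly_Mapping.single 0 n' + e (Suc n')"
  define xs where "xs = [(M, c n'), (Poly_Mapping.single 0 (Suc n'), - G)] @ LX"
  have g: "good K (\<lambda>_. True) xs" using LX(1) cK'[of n'] GK by (auto simp: xs_def good_def)
  have l: "lcv (mev yy) xs = 0"
  proof -
    have "lcv (mev yy) xs = c n' * PP n' - G * v ^ Suc n' + X"
      unfolding xs_def using LX(2) by (simp add: M_def PP_mev yy0)
    also have "c n' * PP n' + X = (\<Sum>i\<le>n'. c i * (v ^ (n' - i) * EE i))"
      unfolding X_def by (simp add: En lessThan_Suc_atMost[symmetric] algebra_simps)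
    ultimately show ?thesis using rel by (simp add: algebra_simps)
  qed
  have "coef xs M = c n'"
  proof -
    have "Suc n' \<in> Poly_Mapping.keys M" by (simp add: M_def in_keys_iff lookup_add lookup_single)
    then have "M \<notin> fst ` set LX"
    proof (intro notI)
      assume sk: "Suc n' \<in> Poly_Mapping.keys M" and "M \<in> fst ` set LX"
      then obtain b where "(M,b) \<in> set LX" by auto
      then have "Poly_Mapping.keys M \<subseteq> {..<Suc n'}" using LX(1) unfolding good_def by fastforce
      then show False using sk by auto
    qed
    then have "coef LX M = 0" by (rule coef_notin)
    moreover have "Poly_Mapping.single 0 (Suc n') \<noteq> M"
    proof
      assume "Poly_Mapping.single 0 (Suc n') = M"
      then have "Poly_Mapping.lookup (Poly_Mapping.single 0 (Suc n')) (Suc n') = Poly_Mapping.lookup M (Suc n')" by simp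
      then show False by (simp add: M_def lookup_add lookup_single)
    qed
    ultimately show ?thesis by (simp add: xs_def)
  qed
  then have "coef xs M \<noteq> 0" using cn' by simp
  moreover have "(\<lambda>i. (\<delta>^^i) v) = yy" by (simp add: yy_def fun_eq_iff)
  ultimately show ?thesis using hyper_of_list[OF g, where m=M and v=v] l by simp
qed

end


theorem proposition2p6:
  fixes K :: "'r::comm_ring_1 set" and \<phi> \<delta> :: "'r \<Rightarrow> 'r" and a a_inv b v :: 'r
  assumes setting: "phi_delta_setting K \<phi> \<delta>"
    and kclosed: "alg_closed_subfield (const_field K \<phi>)"
    and a: "a \<in> K" "a \<noteq> 0" and a_inv: "a_inv \<in> K" "a * a_inv = 1"
    and b: "b \<in> K"
    and v: "v \<noteq> 0"
  shows "((\<phi> v - v = b \<and> hyperalgebraic K \<delta> v)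
            \<longrightarrow> linear_telescoper (const_field K \<phi>) K \<phi> \<delta> b)
       \<and> (((\<exists>w. v * w = 1) \<and> \<phi> v = a * v \<and> hyperalgebraic K \<delta> v)
            \<longrightarrow> linear_telescoper (const_field K \<phi>) K \<phi> \<delta> (\<delta> a * a_inv))
       \<and> ({x. \<phi> x = x} = const_field K \<phi> \<longrightarrow>
            ((\<phi> v - v = b \<and> linear_telescoper (const_field K \<phi>) K \<phi> \<delta> b)
               \<longrightarrow> hyperalgebraic K \<delta> v)
          \<and> (((\<exists>w. v * w = 1) \<and> \<phi> v = a * v \<and> linear_telescoper (const_field K \<phi>) K \<phi> \<delta> (\<delta> a * a_inv))
               \<longrightarrow> hyperalgebraic K \<delta> v))"
proof -
  interpret pds K \<phi> \<delta> by unfold_locales (rule setting)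
  have i1: "(\<phi> v - v = b \<and> hyperalgebraic K \<delta> v) \<longrightarrow> linear_telescoper (const_field K \<phi>) K \<phi> \<delta> b"
    using part1[OF b] by blast
  have i2: "((\<exists>w. v * w = 1) \<and> \<phi> v = a * v \<and> hyperalgebraic K \<delta> v)
            \<longrightarrow> linear_telescoper (const_field K \<phi>) K \<phi> \<delta> (\<delta> a * a_inv)"
  proof (intro impI, elim conjE exE)
    fix w assume vw: "v * w = 1" and phv: "\<phi> v = a * v" and hy: "hyperalgebraic K \<delta> v"
    interpret pii K \<phi> \<delta> v w a a_inv
      by unfold_locales (use vw phv a a_inv in auto)
    show "linear_telescoper (const_field K \<phi>) K \<phi> \<delta> (\<delta> a * a_inv)" using part2[OF hy] by (simp add: g_def)
  qed
  have i3: "{x. \<phi> x = x} = const_field K \<phi> \<longrightarrow>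
            ((\<phi> v - v = b \<and> linear_telescoper (const_field K \<phi>) K \<phi> \<delta> b)
               \<longrightarrow> hyperalgebraic K \<delta> v)
          \<and> (((\<exists>w. v * w = 1) \<and> \<phi> v = a * v \<and> linear_telescoper (const_field K \<phi>) K \<phi> \<delta> (\<delta> a * a_inv))
               \<longrightarrow> hyperalgebraic K \<delta> v)"
  proof (intro impI conjI)
    assume fixc: "{x. \<phi> x = x} = const_field K \<phi>"
    show "\<phi> v - v = b \<and> linear_telescoper (const_field K \<phi>) K \<phi> \<delta> b \<Longrightarrow> hyperalgebraic K \<delta> v"
      using part1_conv[OF fixc] by blast
    assume h: "(\<exists>w. v * w = 1) \<and> \<phi> v = a * v \<and> linear_telescoper (const_field K \<phi>) K \<phi> \<delta> (\<delta> a * a_inv)"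
    then obtain w where vw: "v * w = 1" and phv: "\<phi> v = a * v"
      and tel: "linear_telescoper (const_field K \<phi>) K \<phi> \<delta> (\<delta> a * a_inv)" by blast
    interpret pii K \<phi> \<delta> v w a a_inv
      by unfold_locales (use vw phv a a_inv in auto)
    show "hyperalgebraic K \<delta> v" using part2_conv[OF fixc] tel by (simp add: g_def)
  qed
  show ?thesis using i1 i2 i3 by blast
qed

end
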